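(* Let $(\mathcal C,\otimes,\mathbb 1,c)$ be a symmetric monoidal category. For an integral Hopf algebra $(H,m,u,\underline\Delta,\underline\varepsilon,S,S^{-1},\Lambda,\lambda)$ in $\mathcal C$, the tuple $(H,m,u,\Delta,\varepsilon)$ with $\Delta:=(m\otimes S)(\mathrm{id}_H\otimes\underline\Delta\Lambda)$ and $\varepsilon:=\lambda$ is a Frobenius algebra in $\mathcal C$; and every morphism of integral Hopf algebras $f:H\to K$ is a morphism of the corresponding Frobenius algebras. Hence this assignment, acting as the identity on morphisms, is a well-defined functor $\Psi:\mathsf{IntHopfAlg}(\mathcal C)\to\mathsf{FrobAlg}(\mathcal C)$.
   Context: Monoidal categories are taken strict. A Hopf algebra in a symmetric monoidal category $\mathcal C$ is $(H,m,u,\underline\Delta,\underline\varepsilon,S)$ where $(H,m,u)$ is an associative unital algebra, $(H,\underline\Delta,\underline\varepsilon)$ a coassociative counital coalgebra, $\underline\Delta$ and $\underline\varepsilon$ are algebra morphisms (with $H\otimes H$ having the algebra structure using the symmetry $c$), and $S:H\to H$ satisfies $m(S\otimes\mathrm{id})\underline\Delta=u\underline\varepsilon=m(\mathrm{id}\otimes S)\underline\Delta$. A left integral is $\Lambda:\mathbb 1\to H$ with $m(\mathrm{id}_H\otimes\Lambda)=\Lambda\underline\varepsilon$; a right cointegral is $\lambda:H\to\mathbb 1$ with $(\lambda\otimes\mathrm{id}_H)\underline\Delta=u\lambda$; they are normalized if $\lambda\Lambda=\mathrm{id}_{\mathbb 1}$. An integral Hopf algebra is a Hopf algebra with invertible antipode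 $S$ (inverse $S^{-1}$) equipped with a normalized pair $(\Lambda,\lambda)$. A morphism of integral Hopf algebras is an algebra and coalgebra morphism $f$ with $f\Lambda_H=\Lambda_K$ and $\lambda_Kf=\lambda_H$; these form $\mathsf{IntHopfAlg}(\mathcal C)$. A Frobenius algebra is $(A,m,u,\Delta,\varepsilon)$, an associative unital algebra and coassociative counital coalgebra with $(m\otimes\mathrm{id})(\mathrm{id}\otimes\Delta)=\Delta m=(\mathrm{id}\otimes m)(\Delta\otimes\mathrm{id})$; $\mathsf{FrobAlg}(\mathcal C)$ has morphisms preserving $m,u,\Delta,\varepsilon$. *)

theory Defs
  imports Main
begin

record ('o,'m) smc =
  Ob   :: "'o set"
  Ar   :: "'m set"
  Dom  :: "'m \<Rightarrow> 'o"
  Cod  :: "'m \<Rightarrow> 'o"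
  Idm  :: "'o \<Rightarrow> 'm"
  Cmp  :: "'m \<Rightarrow> 'm \<Rightarrow> 'm"   (* Cmp C g f = g \<circ> f *)
  TnO  :: "'o \<Rightarrow> 'o \<Rightarrow> 'o"
  TnM  :: "'m \<Rightarrow> 'm \<Rightarrow> 'm"
  Unt   :: "'o"
  Sy   :: "'o \<Rightarrow> 'o \<Rightarrow> 'm"

definition hom :: "('o,'m) smc \<Rightarrow> 'm \<Rightarrow> 'o \<Rightarrow> 'o \<Rightarrow> bool" where
  "hom C f A B \<longleftrightarrow> f \<in> Ar C \<and> Dom C f = A \<and> Cod C f = B"

definition strict_symmetric_monoidal_cat :: "('o,'m) smc \<Rightarrow> bool" where
  "strict_symmetric_monoidal_cat C \<longleftrightarrow>
    
    (\<forall>f\<in>Ar C. Dom C f \<in> Ob C \<and> Cod C f \<in> Ob C) \<and>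
    (\<forall>A\<in>Ob C. hom C (Idm C A) A A) \<and>
    (\<forall>f g A B D. hom C f A B \<longrightarrow> hom C g B D \<longrightarrow> hom C (Cmp C g f) A D) \<and>
    (\<forall>f g h A B D E. hom C f A B \<longrightarrow> hom C g B D \<longrightarrow> hom C h D E \<longrightarrow>
        Cmp C h (Cmp C g f) = Cmp C (Cmp C h g) f) \<and>
    (\<forall>f A B. hom C f A B \<longrightarrow> Cmp C f (Idm C A) = f \<and> Cmp C (Idm C B) f = f) \<and>
    
    Unt C \<in> Ob C \<and>
    (\<forall>A\<in>Ob C. \<forall>B\<in>Ob C. TnO C A B \<in> Ob C) \<and>
    (\<forall>f g A B A' B'. hom C f A B \<longrightarrow> hom C g A' B' \<longrightarrow>
        hom C (TnM C f g) (TnO C A A') (TnO C B B')) \<and>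
    (\<forall>A\<in>Ob C. \<forall>B\<in>Ob C. TnM C (Idm C A) (Idm C B) = Idm C (TnO C A B)) \<and>
    (\<forall>f g f' g' A B D A' B' D'. hom C f A B \<longrightarrow> hom C g B D \<longrightarrow>
        hom C f' A' B' \<longrightarrow> hom C g' B' D' \<longrightarrow>
        TnM C (Cmp C g f) (Cmp C g' f') = Cmp C (TnM C g g') (TnM C f f')) \<and>
    
    (\<forall>A\<in>Ob C. \<forall>B\<in>Ob C. \<forall>D\<in>Ob C. TnO C (TnO C A B) D = TnO C A (TnO C B D)) \<and>
    (\<forall>A\<in>Ob C. TnO C (Unt C) A = A \<and> TnO C A (Unt C) = A) \<and>
    (\<forall>f\<in>Ar C. \<forall>g\<in>Ar C. \<forall>h\<in>Ar C. TnM C (TnM C f g) h = TnM C f (TnM C g h)) \<and>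
    (\<forall>f\<in>Ar C. TnM C (Idm C (Unt C)) f = f \<and> TnM C f (Idm C (Unt C)) = f) \<and>
    
    (\<forall>A\<in>Ob C. \<forall>B\<in>Ob C. hom C (Sy C A B) (TnO C A B) (TnO C B A)) \<and>
    (\<forall>f g A A' B B'. hom C f A A' \<longrightarrow> hom C g B B' \<longrightarrow>
        Cmp C (Sy C A' B') (TnM C f g) = Cmp C (TnM C g f) (Sy C A B)) \<and>
    (\<forall>A\<in>Ob C. \<forall>B\<in>Ob C. Cmp C (Sy C B A) (Sy C A B) = Idm C (TnO C A B)) \<and>
    (\<forall>A\<in>Ob C. \<forall>B\<in>Ob C. \<forall>D\<in>Ob C.
        Sy C A (TnO C B D) = Cmp C (TnM C (Idm C B) (Sy C A D)) (TnM C (Sy C A B) (Idm C D))) \<and>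
    (\<forall>A\<in>Ob C. \<forall>B\<in>Ob C. \<forall>D\<in>Ob C.
        Sy C (TnO C A B) D = Cmp C (TnM C (Sy C A D) (Idm C B)) (TnM C (Idm C A) (Sy C B D)))"

definition is_algebra :: "('o,'m) smc \<Rightarrow> 'o \<Rightarrow> 'm \<Rightarrow> 'm \<Rightarrow> bool" where
  "is_algebra C A m u \<longleftrightarrow> A \<in> Ob C \<and>
     hom C m (TnO C A A) A \<and> hom C u (Unt C) A \<and>
     Cmp C m (TnM C m (Idm C A)) = Cmp C m (TnM C (Idm C A) m) \<and>
     Cmp C m (TnM C u (Idm C A)) = Idm C A \<and>
     Cmp C m (TnM C (Idm C A) u) = Idm C A"

definition is_coalgebra :: "('o,'m) smc \<Rightarrow> 'o \<Rightarrow> 'm \<Rightarrow> 'm \<Rightarrow> bool" where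
  "is_coalgebra C A d e \<longleftrightarrow> A \<in> Ob C \<and>
     hom C d A (TnO C A A) \<and> hom C e A (Unt C) \<and>
     Cmp C (TnM C d (Idm C A)) d = Cmp C (TnM C (Idm C A) d) d \<and>
     Cmp C (TnM C e (Idm C A)) d = Idm C A \<and>
     Cmp C (TnM C (Idm C A) e) d = Idm C A"

definition is_frobenius_algebra :: "('o,'m) smc \<Rightarrow> 'o \<Rightarrow> 'm \<Rightarrow> 'm \<Rightarrow> 'm \<Rightarrow> 'm \<Rightarrow> bool" where
  "is_frobenius_algebra C A m u d e \<longleftrightarrow>
     is_algebra C A m u \<and> is_coalgebra C A d e \<and>
     Cmp C (TnM C m (Idm C A)) (TnM C (Idm C A) d) = Cmp C d m \<and>
     Cmp C d m = Cmp C (TnM C (Idm C A) m) (TnM C d (Idm C A))"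

definition is_frobenius_morphism ::
  "('o,'m) smc \<Rightarrow> 'o \<Rightarrow> 'm \<Rightarrow> 'm \<Rightarrow> 'm \<Rightarrow> 'm \<Rightarrow>
                  'o \<Rightarrow> 'm \<Rightarrow> 'm \<Rightarrow> 'm \<Rightarrow> 'm \<Rightarrow> 'm \<Rightarrow> bool" where
  "is_frobenius_morphism C A m u d e B m' u' d' e' f \<longleftrightarrow>
     hom C f A B \<and>
     Cmp C f m = Cmp C m' (TnM C f f) \<and> Cmp C f u = u' \<and>
     Cmp C d' f = Cmp C (TnM C f f) d \<and> Cmp C e' f = e"

record ('o,'m) int_hopf =
  hob  :: "'o"
  hm   :: "'m"
  hu   :: "'m"
  hD   :: "'m"
  he   :: "'m"
  hS   :: "'m"
  hSi  :: "'m"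
  hL   :: "'m"
  hl   :: "'m"

definition is_int_hopf :: "('o,'m) smc \<Rightarrow> ('o,'m) int_hopf \<Rightarrow> bool" where
  "is_int_hopf C H \<longleftrightarrow>
    (let A = hob H; m = hm H; u = hu H; d = hD H; e = he H; S = hS H; Si = hSi H;
         L = hL H; l = hl H; i = Idm C A in
     is_algebra C A m u \<and> is_coalgebra C A d e \<and>
     \<comment> \<open>Delta and epsilon are algebra morphisms (H \<otimes> H with the algebra structure via c)\<close>
     Cmp C d m = Cmp C (Cmp C (TnM C m m) (TnM C i (TnM C (Sy C A A) i))) (TnM C d d) \<and>
     Cmp C d u = TnM C u u \<and>
     Cmp C e m = TnM C e e \<and>
     Cmp C e u = Idm C (Unt C) \<and>
     
     hom C S A A \<and>
     Cmp C (Cmp C m (TnM C S i)) d = Cmp C u e \<and>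
     Cmp C (Cmp C m (TnM C i S)) d = Cmp C u e \<and>
     
     hom C Si A A \<and> Cmp C S Si = i \<and> Cmp C Si S = i \<and>
     
     hom C L (Unt C) A \<and> Cmp C m (TnM C i L) = Cmp C L e \<and>
     hom C l A (Unt C) \<and> Cmp C (TnM C l i) d = Cmp C u l \<and>
     Cmp C l L = Idm C (Unt C))"

definition is_int_hopf_morphism ::
  "('o,'m) smc \<Rightarrow> ('o,'m) int_hopf \<Rightarrow> ('o,'m) int_hopf \<Rightarrow> 'm \<Rightarrow> bool" where
  "is_int_hopf_morphism C H K f \<longleftrightarrow>
     hom C f (hob H) (hob K) \<and>
     Cmp C f (hm H) = Cmp C (hm K) (TnM C f f) \<and> Cmp C f (hu H) = hu K \<and>
     Cmp C (hD K) f = Cmp C (TnM C f f) (hD H) \<and> Cmp C (he K) f = he H \<and>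
     Cmp C f (hL H) = hL K \<and> Cmp C (hl K) f = hl H"

definition frob_comult :: "('o,'m) smc \<Rightarrow> ('o,'m) int_hopf \<Rightarrow> 'm" where
  "frob_comult C H =
     Cmp C (TnM C (hm H) (hS H)) (TnM C (Idm C (hob H)) (Cmp C (hD H) (hL H)))"

end

theory Submission
  imports Defs
begin

locale smcl =
  fixes C :: "('o,'m) smc"
  assumes smc: "strict_symmetric_monoidal_cat C"
begin

lemmas Ax0 = smc[unfolded strict_symmetric_monoidal_cat_def]
lemmas X1 = Ax0[THEN conjunct1]
lemmas Ax1 = Ax0[THEN conjunct2]
lemmas X2 = Ax1[THEN conjunct1]
lemmas Ax2 = Ax1[THEN conjunct2]
lemmas X3 = Ax2[THEN conjunct1]
lemmas Ax3 = Ax2[THEN conjunct2]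
lemmas X4 = Ax3[THEN conjunct1]
lemmas Ax4 = Ax3[THEN conjunct2]
lemmas X5 = Ax4[THEN conjunct1]
lemmas Ax5 = Ax4[THEN conjunct2]
lemmas X6 = Ax5[THEN conjunct1]
lemmas Ax6 = Ax5[THEN conjunct2]
lemmas X7 = Ax6[THEN conjunct1]
lemmas Ax7 = Ax6[THEN conjunct2]
lemmas X8 = Ax7[THEN conjunct1]
lemmas Ax8 = Ax7[THEN conjunct2]
lemmas X9 = Ax8[THEN conjunct1]
lemmas Ax9 = Ax8[THEN conjunct2]
lemmas X10 = Ax9[THEN conjunct1]
lemmas Ax10 = Ax9[THEN conjunct2]
lemmas X11 = Ax10[THEN conjunct1]
lemmas Ax11 = Ax10[THEN conjunct2]
lemmas X12 = Ax11[THEN conjunct1]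
lemmas Ax12 = Ax11[THEN conjunct2]
lemmas X13 = Ax12[THEN conjunct1]
lemmas Ax13 = Ax12[THEN conjunct2]
lemmas X14 = Ax13[THEN conjunct1]
lemmas Ax14 = Ax13[THEN conjunct2]
lemmas X15 = Ax14[THEN conjunct1]
lemmas Ax15 = Ax14[THEN conjunct2]
lemmas X16 = Ax15[THEN conjunct1]
lemmas Ax16 = Ax15[THEN conjunct2]
lemmas X17 = Ax16[THEN conjunct1]
lemmas Ax17 = Ax16[THEN conjunct2]
lemmas X18 = Ax17[THEN conjunct1]
lemmas Ax18 = Ax17[THEN conjunct2]
lemmas X19 = Ax18

lemma ob_dom[simp]: "f \<in> Ar C \<Longrightarrow> Dom C f \<in> Ob C"
  using X1 by blast
lemma ob_cod[simp]: "f \<in> Ar C \<Longrightarrow> Cod C f \<in> Ob C"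
  using X1 by blast
lemma id_hom: "A \<in> Ob C \<Longrightarrow> hom C (Idm C A) A A"
  using X2 by blast
lemma cmp_hom: "hom C f A B \<Longrightarrow> hom C g B D \<Longrightarrow> hom C (Cmp C g f) A D"
  using X3 by blast
lemma cmp_assoc_h: "hom C f A B \<Longrightarrow> hom C g B D \<Longrightarrow> hom C h D E \<Longrightarrow>
        Cmp C h (Cmp C g f) = Cmp C (Cmp C h g) f"
  using X4 by blast
lemma id_lr: "hom C f A B \<Longrightarrow> Cmp C f (Idm C A) = f \<and> Cmp C (Idm C B) f = f"
  using X5 by blast
lemma unit_ob[simp]: "Unt C \<in> Ob C"
  using X6 by blast
lemma tno_ob[simp]: "A \<in> Ob C \<Longrightarrow> B \<in> Ob C \<Longrightarrow> TnO C A B \<in> Ob C"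
  using X7 by blast
lemma tn_hom: "hom C f A B \<Longrightarrow> hom C g A' B' \<Longrightarrow> hom C (TnM C f g) (TnO C A A') (TnO C B B')"
  using X8 by blast
lemma tn_id: "A \<in> Ob C \<Longrightarrow> B \<in> Ob C \<Longrightarrow> TnM C (Idm C A) (Idm C B) = Idm C (TnO C A B)"
  using X9 by blast
lemma interchange: "hom C f A B \<Longrightarrow> hom C g B D \<Longrightarrow>
        hom C f' A' B' \<Longrightarrow> hom C g' B' D' \<Longrightarrow>
        TnM C (Cmp C g f) (Cmp C g' f') = Cmp C (TnM C g g') (TnM C f f')"
  using X10 by blast
lemma tno_assoc[simp]: "A \<in> Ob C \<Longrightarrow> B \<in> Ob C \<Longrightarrow> D \<in> Ob C \<Longrightarrow>
   TnO C (TnO C A B) D = TnO C A (TnO C B D)"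
  using X11 by blast
lemma tno_unit[simp]: "A \<in> Ob C \<Longrightarrow> TnO C (Unt C) A = A"  "A \<in> Ob C \<Longrightarrow> TnO C A (Unt C) = A"
  using X12 by blast+
lemma tn_assoc: "f \<in> Ar C \<Longrightarrow> g \<in> Ar C \<Longrightarrow> h \<in> Ar C \<Longrightarrow> TnM C (TnM C f g) h = TnM C f (TnM C g h)"
  using X13 by blast
lemma tn_unit[simp]: "f \<in> Ar C \<Longrightarrow> TnM C (Idm C (Unt C)) f = f"  "f \<in> Ar C \<Longrightarrow> TnM C f (Idm C (Unt C)) = f"
  using X14 by blast+
lemma sy_hom: "A \<in> Ob C \<Longrightarrow> B \<in> Ob C \<Longrightarrow> hom C (Sy C A B) (TnO C A B) (TnO C B A)"
  using X15 by blast
lemma sy_nat: "hom C f A A' \<Longrightarrow> hom C g B B' \<Longrightarrow>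
        Cmp C (Sy C A' B') (TnM C f g) = Cmp C (TnM C g f) (Sy C A B)"
  using X16 by blast
lemma sy_inv: "A \<in> Ob C \<Longrightarrow> B \<in> Ob C \<Longrightarrow> Cmp C (Sy C B A) (Sy C A B) = Idm C (TnO C A B)"
  using X17 by blast
lemma hex1: "A \<in> Ob C \<Longrightarrow> B \<in> Ob C \<Longrightarrow> D \<in> Ob C \<Longrightarrow>
        Sy C A (TnO C B D) = Cmp C (TnM C (Idm C B) (Sy C A D)) (TnM C (Sy C A B) (Idm C D))"
  using X18 by blast
lemma hex2: "A \<in> Ob C \<Longrightarrow> B \<in> Ob C \<Longrightarrow> D \<in> Ob C \<Longrightarrow>
        Sy C (TnO C A B) D = Cmp C (TnM C (Sy C A D) (Idm C B)) (TnM C (Idm C A) (Sy C B D))"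
  using X19 by blast

lemma arr_id[simp]: "A \<in> Ob C \<Longrightarrow> Idm C A \<in> Ar C" "A \<in> Ob C \<Longrightarrow> Dom C (Idm C A) = A"
   "A \<in> Ob C \<Longrightarrow> Cod C (Idm C A) = A"
  using id_hom by (auto simp: hom_def)
lemma arr_cmp[simp]: "f \<in> Ar C \<Longrightarrow> g \<in> Ar C \<Longrightarrow> Cod C f = Dom C g \<Longrightarrow> Cmp C g f \<in> Ar C"
  "f \<in> Ar C \<Longrightarrow> g \<in> Ar C \<Longrightarrow> Cod C f = Dom C g \<Longrightarrow> Dom C (Cmp C g f) = Dom C f"
  "f \<in> Ar C \<Longrightarrow> g \<in> Ar C \<Longrightarrow> Cod C f = Dom C g \<Longrightarrow> Cod C (Cmp C g f) = Cod C g"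
  using cmp_hom[of f "Dom C f" "Cod C f" g "Cod C g"] by (auto simp: hom_def)
lemma arr_tn[simp]: "f \<in> Ar C \<Longrightarrow> g \<in> Ar C \<Longrightarrow> TnM C f g \<in> Ar C"
  "f \<in> Ar C \<Longrightarrow> g \<in> Ar C \<Longrightarrow> Dom C (TnM C f g) = TnO C (Dom C f) (Dom C g)"
  "f \<in> Ar C \<Longrightarrow> g \<in> Ar C \<Longrightarrow> Cod C (TnM C f g) = TnO C (Cod C f) (Cod C g)"
  using tn_hom[of f "Dom C f" "Cod C f" g "Dom C g" "Cod C g"] by (auto simp: hom_def)
lemma arr_sy[simp]: "A \<in> Ob C \<Longrightarrow> B \<in> Ob C \<Longrightarrow> Sy C A B \<in> Ar C"
  "A \<in> Ob C \<Longrightarrow> B \<in> Ob C \<Longrightarrow> Dom C (Sy C A B) = TnO C A B"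
  "A \<in> Ob C \<Longrightarrow> B \<in> Ob C \<Longrightarrow> Cod C (Sy C A B) = TnO C B A"
  using sy_hom by (auto simp: hom_def)

lemma cmp_assoc: "f \<in> Ar C \<Longrightarrow> g \<in> Ar C \<Longrightarrow> h \<in> Ar C \<Longrightarrow> Cod C f = Dom C g \<Longrightarrow> Cod C g = Dom C h \<Longrightarrow>
   Cmp C (Cmp C h g) f = Cmp C h (Cmp C g f)"
  using cmp_assoc_h[of f "Dom C f" "Cod C f" g "Cod C g" h "Cod C h"] by (auto simp: hom_def)
lemma id_left[simp]: "f \<in> Ar C \<Longrightarrow> Cod C f = B \<Longrightarrow> Cmp C (Idm C B) f = f"
  using id_lr[of f "Dom C f" "Cod C f"] by (auto simp: hom_def)
lemma id_right[simp]: "f \<in> Ar C \<Longrightarrow> Dom C f = B \<Longrightarrow> Cmp C f (Idm C B) = f"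
  using id_lr[of f "Dom C f" "Cod C f"] by (auto simp: hom_def)
lemma interch: "f \<in> Ar C \<Longrightarrow> g \<in> Ar C \<Longrightarrow> f' \<in> Ar C \<Longrightarrow> g' \<in> Ar C \<Longrightarrow>
   Cod C f = Dom C g \<Longrightarrow> Cod C f' = Dom C g' \<Longrightarrow>
   Cmp C (TnM C g g') (TnM C f f') = TnM C (Cmp C g f) (Cmp C g' f')"
  using interchange[of f "Dom C f" "Cod C f" g "Cod C g" f' "Dom C f'" "Cod C f'" g' "Cod C g'"]
  by (auto simp: hom_def)

lemma sy_unit_r: "B \<in> Ob C \<Longrightarrow> Sy C B (Unt C) = Idm C B"
proof -
  assume B: "B \<in> Ob C"
  define s where "s = Sy C B (Unt C)"
  define t where "t = Sy C (Unt C) B"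
  have ss: "s = Cmp C s s" using hex1[of B "Unt C" "Unt C"] B unfolding s_def by simp
  have ts: "Cmp C t s = Idm C B" using sy_inv[of B "Unt C"] B unfolding s_def t_def by simp
  have sh: "s \<in> Ar C" "Dom C s = B" "Cod C s = B" using B unfolding s_def by simp_all
  have th: "t \<in> Ar C" "Dom C t = B" "Cod C t = B" using B unfolding t_def by simp_all
  have "s = Cmp C (Cmp C t s) s" using ts sh by simp
  also have "\<dots> = Cmp C t (Cmp C s s)" using sh th by (simp add: cmp_assoc)
  also have "\<dots> = Idm C B" using ss ts by simp
  finally show ?thesis unfolding s_def .
qed

lemma sy_unit_l: "B \<in> Ob C \<Longrightarrow> Sy C (Unt C) B = Idm C B"
proof -
  assume B: "B \<in> Ob C"
  have "Cmp C (Sy C B (Unt C)) (Sy C (Unt C) B) = Idm C B" using sy_inv[of "Unt C" B] B by simp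
  then show ?thesis using B sy_unit_r[OF B] by simp
qed

end

definition pw :: "('o,'m) smc \<Rightarrow> 'o \<Rightarrow> nat \<Rightarrow> 'o" where
  "pw C A n = (TnO C A ^^ n) (Unt C)"
definition Lay :: "('o,'m) smc \<Rightarrow> 'o \<Rightarrow> nat \<Rightarrow> 'm \<Rightarrow> nat \<Rightarrow> 'm" where
  "Lay C A n g k = TnM C (Idm C (pw C A n)) (TnM C g (Idm C (pw C A k)))"

datatype gen = GM | GU | GD | GE | GS | GI | GL | Gl | GY | GF

fun ia :: "gen \<Rightarrow> nat" where
  "ia GM = 2" | "ia GU = 0" | "ia GD = 1" | "ia GE = 1" | "ia GS = 1" | "ia GI = 1"
| "ia GL = 0" | "ia Gl = 1" | "ia GY = 2" | "ia GF = 1"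
fun oa :: "gen \<Rightarrow> nat" where
  "oa GM = 1" | "oa GU = 1" | "oa GD = 2" | "oa GE = 0" | "oa GS = 1" | "oa GI = 1"
| "oa GL = 1" | "oa Gl = 0" | "oa GY = 2" | "oa GF = 2"

type_synonym layer = "nat \<times> gen \<times> nat"

fun ldom :: "layer \<Rightarrow> nat" where "ldom (n,g,k) = n + ia g + k"
fun lcod :: "layer \<Rightarrow> nat" where "lcod (n,g,k) = n + oa g + k"
fun outN :: "nat \<Rightarrow> layer list \<Rightarrow> nat" where
  "outN N [] = N" | "outN N (x#xs) = lcod x"
fun wtc :: "nat \<Rightarrow> layer list \<Rightarrow> bool" where
  "wtc N [] = True" | "wtc N (x#xs) = (wtc N xs \<and> ldom x = outN N xs)"
fun sh :: "nat \<Rightarrow> nat \<Rightarrow> layer \<Rightarrow> layer" where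
  "sh n k (a,g,b) = (n+a,g,b+k)"
fun sem :: "('o,'m) smc \<Rightarrow> 'o \<Rightarrow> (gen \<Rightarrow> 'm) \<Rightarrow> nat \<Rightarrow> layer list \<Rightarrow> 'm" where
  "sem C A I N [] = Idm C (pw C A N)"
| "sem C A I N ((n,g,k)#xs) = Cmp C (Lay C A n (I g) k) (sem C A I N xs)"
declare sem.simps[simp del]

lemma outN_app[simp]: "outN N (xs @ ys) = outN (outN N ys) xs"
  by (induction xs) auto
lemma wtc_app: "wtc N (xs @ ys) = (wtc N ys \<and> wtc (outN N ys) xs)"
  by (induction xs) auto
lemma wtc_last: "wtc N (xs @ ys) \<Longrightarrow> xs \<noteq> [] \<Longrightarrow> outN N ys = ldom (last xs)"
  by (induction xs) auto
lemma ldom_sh[simp]: "ldom (sh n k x) = n + ldom x + k" by (cases x) auto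
lemma lcod_sh[simp]: "lcod (sh n k x) = n + lcod x + k" by (cases x) auto
lemma outN_sh: "outN (n+M+k) (map (sh n k) xs) = n + outN M xs + k"
  by (induction xs) auto
lemma wtc_sh: "wtc (n+M+k) (map (sh n k) xs) = wtc M xs"
  by (induction xs) (auto simp: outN_sh)

locale smcA = smcl +
  fixes A :: 'o
  assumes A_ob[simp]: "A \<in> Ob C"
begin

abbreviation P where "P n \<equiv> pw C A n"
abbreviation LY where "LY n g k \<equiv> Lay C A n g k"

lemma pw_0: "P 0 = Unt C" by (simp add: pw_def)
lemma pw_Suc: "P (Suc n) = TnO C A (P n)" by (simp add: pw_def)
lemma pw_ob[simp]: "P n \<in> Ob C" by (induction n) (auto simp: pw_0 pw_Suc)
lemma pw_add[simp]: "TnO C (P a) (P b) = P (a+b)"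
  by (induction a) (auto simp: pw_0 pw_Suc)
lemma pw_1: "P (Suc 0) = A" by (simp add: pw_Suc pw_0)

lemma Lay_arr[simp]: "g \<in> Ar C \<Longrightarrow> LY n g k \<in> Ar C"
  "g \<in> Ar C \<Longrightarrow> Dom C (LY n g k) = TnO C (P n) (TnO C (Dom C g) (P k))"
  "g \<in> Ar C \<Longrightarrow> Cod C (LY n g k) = TnO C (P n) (TnO C (Cod C g) (P k))"
  by (auto simp: Lay_def)

lemma Lay_cmp: "f \<in> Ar C \<Longrightarrow> g \<in> Ar C \<Longrightarrow> Cod C f = Dom C g \<Longrightarrow>
   LY n (Cmp C g f) k = Cmp C (LY n g k) (LY n f k)"
  unfolding Lay_def by (simp add: interch)

lemma Lay_id[simp]: "LY n (Idm C (P a)) k = Idm C (P (n+a+k))"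
  unfolding Lay_def by (simp add: tn_id add.assoc)

lemma id_merge: "X \<in> Ar C \<Longrightarrow> TnM C (Idm C (P n)) (TnM C (Idm C (P a)) X) = TnM C (Idm C (P (n+a))) X"
  by (simp add: tn_assoc[symmetric] tn_id)

lemma Lay_Lay: "g \<in> Ar C \<Longrightarrow> LY n (LY a g b) k = LY (n+a) g (b+k)"
  unfolding Lay_def by (simp add: tn_assoc id_merge tn_id)

lemma Lay_00: "g \<in> Ar C \<Longrightarrow> LY 0 g 0 = g"
  unfolding Lay_def by (simp add: pw_0)
lemma Lay_0: "g \<in> Ar C \<Longrightarrow> LY 0 g k = TnM C g (Idm C (P k))"
  "g \<in> Ar C \<Longrightarrow> LY n g 0 = TnM C (Idm C (P n)) g"
  unfolding Lay_def by (simp_all add: pw_0)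

lemma id_split: "Idm C (P (a+b)) = TnM C (Idm C (P a)) (Idm C (P b))"
  by (simp add: tn_id)

lemma Lay_exch:
  assumes g: "g \<in> Ar C" "Dom C g = P a" "Cod C g = P b"
    and h: "h \<in> Ar C" "Dom C h = P c" "Cod C h = P d"
  shows "Cmp C (LY 0 g (p+d)) (LY (a+p) h 0) = Cmp C (LY (b+p) h 0) (LY 0 g (p+c))"
proof -
  have "Cmp C (LY 0 g (p+d)) (LY (a+p) h 0) = Cmp C (TnM C g (Idm C (P (p+d)))) (TnM C (Idm C (P (a+p))) h)"
    using g h by (simp add: Lay_0)
  also have "\<dots> = TnM C g (TnM C (Idm C (P p)) h)"
    unfolding id_split[of p d] id_split[of a p] using g h by (simp add: tn_assoc interch)
  finally have 1: "Cmp C (LY 0 g (p+d)) (LY (a+p) h 0) = TnM C g (TnM C (Idm C (P p)) h)" .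
  have "Cmp C (LY (b+p) h 0) (LY 0 g (p+c)) = Cmp C (TnM C (Idm C (P (b+p))) h) (TnM C g (Idm C (P (p+c))))"
    using g h by (simp add: Lay_0)
  also have "\<dots> = TnM C g (TnM C (Idm C (P p)) h)"
    unfolding id_split[of p c] id_split[of b p] using g h by (simp add: tn_assoc interch)
  finally show ?thesis using 1 by simp
qed

end

locale laysys = smcA C A for C :: "('o,'m) smc" and A +
  fixes I :: "gen \<Rightarrow> 'm"
  assumes gI_ar[simp]: "I g \<in> Ar C" and gI_dom[simp]: "Dom C (I g) = P (ia g)"
    and gI_cod[simp]: "Cod C (I g) = P (oa g)"
begin

abbreviation SM where "SM N xs \<equiv> sem C A I N xs"

lemma sem_typ: "wtc N xs \<Longrightarrow> SM N xs \<in> Ar C \<and> Dom C (SM N xs) = P N \<and> Cod C (SM N xs) = P (outN N xs)"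
proof (induction xs)
  case Nil
  then show ?case by (simp add: sem.simps)
next
  case (Cons x xs)
  obtain n g k where x: "x = (n,g,k)" by (cases x) auto
  show ?case using Cons by (simp add: x sem.simps add.assoc)
qed

lemma sem_ar[simp]: "wtc N xs \<Longrightarrow> SM N xs \<in> Ar C"
  "wtc N xs \<Longrightarrow> Dom C (SM N xs) = P N" "wtc N xs \<Longrightarrow> Cod C (SM N xs) = P (outN N xs)"
  using sem_typ by auto

lemma sem_app: "wtc N (xs @ ys) \<Longrightarrow> SM N (xs @ ys) = Cmp C (SM (outN N ys) xs) (SM N ys)"
proof (induction xs)
  case Nil
  then show ?case by (simp add: sem.simps)
next
  case (Cons x xs)
  obtain n g k where x: "x = (n,g,k)" by (cases x) auto
  have w: "wtc N ys" "wtc (outN N ys) xs" "n + ia g + k = outN (outN N ys) xs"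
    using Cons(2) by (auto simp: x wtc_app)
  have "SM N ((x # xs) @ ys) = Cmp C (LY n (I g) k) (SM N (xs @ ys))"
    by (simp add: x sem.simps)
  also have "\<dots> = Cmp C (LY n (I g) k) (Cmp C (SM (outN N ys) xs) (SM N ys))"
    using Cons w by (simp add: wtc_app)
  also have "\<dots> = Cmp C (Cmp C (LY n (I g) k) (SM (outN N ys) xs)) (SM N ys)"
    using w by (subst cmp_assoc) (simp_all add: add.assoc)
  finally show ?case by (simp add: x sem.simps)
qed

lemma sem_sh: "wtc M xs \<Longrightarrow> SM (n+M+k) (map (sh n k) xs) = LY n (SM M xs) k"
proof (induction xs)
  case Nil
  then show ?case by (simp add: sem.simps)
next
  case (Cons x xs)
  obtain a g b where x: "x = (a,g,b)" by (cases x) auto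
  have w: "wtc M xs" "a + ia g + b = outN M xs" using Cons(2) by (auto simp: x)
  have "SM (n+M+k) (map (sh n k) (x#xs)) = Cmp C (LY (n+a) (I g) (b+k)) (LY n (SM M xs) k)"
    using Cons w by (simp add: x sem.simps)
  also have "\<dots> = Cmp C (LY n (LY a (I g) b) k) (LY n (SM M xs) k)"
    by (simp add: Lay_Lay)
  also have "\<dots> = LY n (Cmp C (LY a (I g) b) (SM M xs)) k"
    using w by (subst Lay_cmp) (simp_all add: add.assoc)
  finally show ?case by (simp add: x sem.simps)
qed

lemma sem_pre_eq:
  assumes "wtc N (Q @ R)" "wtc N (Q @ R')" "SM N R = SM N R'"
  shows "SM N (Q @ R) = SM N (Q @ R')"
proof (cases "Q = []")
  case True then show ?thesis using assms by simp
next
  case False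
  have "outN N R = outN N R'" using wtc_last[OF assms(1) False] wtc_last[OF assms(2) False] by simp
  then show ?thesis using assms by (simp add: sem_app)
qed

lemma rep_sh:
  assumes E: "SM M0 xs = SM M0 ys"
  and t: "take i L = take i L'"
  and d: "drop (i + length xs) L = drop (i + length ys) L'"
  and w1: "take (length xs) (drop i L) = map (sh n k) xs"
  and w2: "take (length ys) (drop i L') = map (sh n k) ys"
  and o: "outN N (drop (i + length xs) L) = n + M0 + k"
  and wt: "wtc N L" "wtc N L'"
  shows "SM N L = SM N L'"
proof -
  define Q where "Q = take i L"
  define R where "R = drop (i + length xs) L"
  define W where "W = map (sh n k) xs"
  define W' where "W' = map (sh n k) ys"
  have L0: "L = take i L @ take (length xs) (drop i L) @ drop (i + length xs) L"
    by (metis append_take_drop_id drop_drop add.commute)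
  have L: "L = Q @ W @ R" using L0 w1 unfolding Q_def R_def W_def by simp
  have L0': "L' = take i L' @ take (length ys) (drop i L') @ drop (i + length ys) L'"
    by (metis append_take_drop_id drop_drop add.commute)
  have L': "L' = Q @ W' @ R" using L0' w2 t d unfolding Q_def R_def W'_def by simp
  have wWR: "wtc N (W @ R)" "wtc N (W' @ R)" using wt L L' wtc_app by auto
  have wR: "wtc N R" and wW: "wtc (outN N R) W" and wW': "wtc (outN N R) W'"
    using wWR wtc_app by auto
  have oR: "outN N R = n + M0 + k" using o R_def by simp
  have wx: "wtc M0 xs" using wW oR wtc_sh W_def by metis
  have wy: "wtc M0 ys" using wW' oR wtc_sh W'_def by metis
  have "SM N (W @ R) = Cmp C (SM (n+M0+k) W) (SM N R)" using wWR oR by (simp add: sem_app)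
  also have "\<dots> = Cmp C (LY n (SM M0 xs) k) (SM N R)" using wx by (simp add: W_def sem_sh)
  also have "\<dots> = Cmp C (LY n (SM M0 ys) k) (SM N R)" using E by simp
  also have "\<dots> = Cmp C (SM (n+M0+k) W') (SM N R)" using wy by (simp add: W'_def sem_sh)
  also have "\<dots> = SM N (W' @ R)" using wWR oR by (simp add: sem_app)
  finally have "SM N (W @ R) = SM N (W' @ R)" .
  then show ?thesis using sem_pre_eq[where Q=Q and R="W@R" and R'="W'@R"] wt L L' by simp
qed

lemma exch: "SM (ia g + p + ia h) [(0,g,p + oa h), (ia g + p, h, 0)]
          = SM (ia g + p + ia h) [(oa g + p, h, 0), (0, g, p + ia h)]"
  using Lay_exch[of "I g" "ia g" "oa g" "I h" "ia h" "oa h" p]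
  by (simp add: sem.simps add.assoc add.left_commute add.commute)

end

fun gI :: "('o,'m) smc \<Rightarrow> ('o,'m) int_hopf \<Rightarrow> gen \<Rightarrow> 'm" where
  "gI C H GM = hm H" | "gI C H GU = hu H" | "gI C H GD = hD H" | "gI C H GE = he H"
| "gI C H GS = hS H" | "gI C H GI = hSi H" | "gI C H GL = hL H" | "gI C H Gl = hl H"
| "gI C H GY = Sy C (hob H) (hob H)" | "gI C H GF = frob_comult C H"

locale ihopf = smcl C for C :: "('o,'m) smc" +
  fixes H :: "('o,'m) int_hopf"
  assumes ih: "is_int_hopf C H"
begin

abbreviation "A \<equiv> hob H"
abbreviation "mu \<equiv> hm H"
abbreviation "un \<equiv> hu H"
abbreviation "de \<equiv> hD H"
abbreviation "ep \<equiv> he H"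
abbreviation "an \<equiv> hS H"
abbreviation "ai \<equiv> hSi H"
abbreviation "Lam \<equiv> hL H"
abbreviation "lam \<equiv> hl H"
abbreviation "ii \<equiv> Idm C (hob H)"
abbreviation "sg \<equiv> Sy C (hob H) (hob H)"

lemmas IH = ih[unfolded is_int_hopf_def Let_def is_algebra_def is_coalgebra_def]

lemma A_ob[simp]: "A \<in> Ob C" using IH by blast
lemma h_mu: "hom C mu (TnO C A A) A" using IH by blast
lemma h_un: "hom C un (Unt C) A" using IH by blast
lemma h_de: "hom C de A (TnO C A A)" using IH by blast
lemma h_ep: "hom C ep A (Unt C)" using IH by blast
lemma h_an: "hom C an A A" using IH by blast
lemma h_ai: "hom C ai A A" using IH by blast
lemma h_Lam: "hom C Lam (Unt C) A" using IH by blast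
lemma h_lam: "hom C lam A (Unt C)" using IH by blast
lemma r_assoc: "Cmp C mu (TnM C mu ii) = Cmp C mu (TnM C ii mu)" using IH by blast
lemma r_unitL: "Cmp C mu (TnM C un ii) = ii" using IH by blast
lemma r_unitR: "Cmp C mu (TnM C ii un) = ii" using IH by blast
lemma r_coassoc: "Cmp C (TnM C de ii) de = Cmp C (TnM C ii de) de" using IH by blast
lemma r_counitL: "Cmp C (TnM C ep ii) de = ii" using IH by blast
lemma r_counitR: "Cmp C (TnM C ii ep) de = ii" using IH by blast
lemma r_bialg: "Cmp C de mu = Cmp C (Cmp C (TnM C mu mu) (TnM C ii (TnM C sg ii))) (TnM C de de)" using IH by blast
lemma r_du: "Cmp C de un = TnM C un un" using IH by blast
lemma r_em: "Cmp C ep mu = TnM C ep ep" using IH by blast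
lemma r_eu: "Cmp C ep un = Idm C (Unt C)" using IH by blast
lemma r_H1: "Cmp C (Cmp C mu (TnM C an ii)) de = Cmp C un ep" using IH by blast
lemma r_H2: "Cmp C (Cmp C mu (TnM C ii an)) de = Cmp C un ep" using IH by blast
lemma r_SSi: "Cmp C an ai = ii" using IH by blast
lemma r_SiS: "Cmp C ai an = ii" using IH by blast
lemma r_I1: "Cmp C mu (TnM C ii Lam) = Cmp C Lam ep" using IH by blast
lemma r_I2: "Cmp C (TnM C lam ii) de = Cmp C un lam" using IH by blast
lemma r_I3: "Cmp C lam Lam = Idm C (Unt C)" using IH by blast

lemma tp[simp]:
  "mu \<in> Ar C" "Dom C mu = TnO C A A" "Cod C mu = A"
  "un \<in> Ar C" "Dom C un = Unt C" "Cod C un = A"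
  "de \<in> Ar C" "Dom C de = A" "Cod C de = TnO C A A"
  "ep \<in> Ar C" "Dom C ep = A" "Cod C ep = Unt C"
  "an \<in> Ar C" "Dom C an = A" "Cod C an = A"
  "ai \<in> Ar C" "Dom C ai = A" "Cod C ai = A"
  "Lam \<in> Ar C" "Dom C Lam = Unt C" "Cod C Lam = A"
  "lam \<in> Ar C" "Dom C lam = A" "Cod C lam = Unt C"
  using h_mu h_un h_de h_ep h_an h_ai h_Lam h_lam by (auto simp: hom_def)

sublocale smcA C A by unfold_locales simp

lemma P1A: "P 1 = A" using pw_1 by simp
lemma P2A: "P 2 = TnO C A A" by (simp add: numeral_2_eq_2 pw_Suc pw_0)
lemma P3A: "P 3 = TnO C A (TnO C A A)" by (simp add: numeral_3_eq_3 pw_Suc pw_0)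

lemma tpF[simp]: "frob_comult C H \<in> Ar C" "Dom C (frob_comult C H) = A"
   "Cod C (frob_comult C H) = TnO C A A"
  unfolding frob_comult_def by simp_all

lemma gtyp: "gI C H g \<in> Ar C \<and> Dom C (gI C H g) = P (ia g) \<and> Cod C (gI C H g) = P (oa g)"
  by (cases g) (simp_all add: P1A P2A pw_0 pw_1)

sublocale laysys C A "gI C H" by unfold_locales (simp_all add: gtyp)

lemmas rsimps = sem.simps Lay_00 Lay_0 P1A P2A P3A pw_0 pw_1

lemma b_assoc: "SM 3 [(0,GM,0),(0,GM,1)] = SM 3 [(0,GM,0),(1,GM,0)]"
  by (simp add: rsimps r_assoc)
lemma b_unitL: "SM 1 [(0,GM,0),(0,GU,1)] = SM 1 []"
  by (simp add: rsimps r_unitL)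
lemma b_unitR: "SM 1 [(0,GM,0),(1,GU,0)] = SM 1 []"
  by (simp add: rsimps r_unitR)
lemma b_coassoc: "SM 1 [(0,GD,1),(0,GD,0)] = SM 1 [(1,GD,0),(0,GD,0)]"
  by (simp add: rsimps r_coassoc)
lemma b_counitL: "SM 1 [(0,GE,1),(0,GD,0)] = SM 1 []"
  by (simp add: rsimps r_counitL)
lemma b_counitR: "SM 1 [(1,GE,0),(0,GD,0)] = SM 1 []"
  by (simp add: rsimps r_counitR)


lemma split_mumu: "TnM C mu mu = Cmp C (TnM C mu ii) (TnM C (Idm C (TnO C A A)) mu)"
  by (simp add: interch)
lemma split_dede: "TnM C de de = Cmp C (TnM C de (Idm C (TnO C A A))) (TnM C ii de)"
  by (simp add: interch)
lemma split_unun: "TnM C un un = Cmp C (TnM C un ii) un"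
  using interch[of "Idm C (Unt C)" un un ii] by simp

lemma b_bialg: "SM 2 [(0,GD,0),(0,GM,0)] = SM 2 [(0,GM,1),(2,GM,0),(1,GY,1),(0,GD,2),(1,GD,0)]"
  using r_bialg unfolding split_mumu split_dede
  by (simp add: rsimps cmp_assoc Lay_def)
lemma b_eu: "SM 0 [(0,GE,0),(0,GU,0)] = SM 0 []"
  using r_eu by (simp add: rsimps cmp_assoc)
lemma b_du: "SM 0 [(0,GD,0),(0,GU,0)] = SM 0 [(0,GU,1),(0,GU,0)]"
  using r_du unfolding split_unun by (simp add: rsimps cmp_assoc)
lemma b_H1: "SM 1 [(0,GM,0),(0,GS,1),(0,GD,0)] = SM 1 [(0,GU,0),(0,GE,0)]"
  using r_H1 by (simp add: rsimps cmp_assoc)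
lemma b_H2: "SM 1 [(0,GM,0),(1,GS,0),(0,GD,0)] = SM 1 [(0,GU,0),(0,GE,0)]"
  using r_H2 by (simp add: rsimps cmp_assoc)
lemma b_SSi: "SM 1 [(0,GS,0),(0,GI,0)] = SM 1 []"
  using r_SSi by (simp add: rsimps cmp_assoc)
lemma b_SiS: "SM 1 [(0,GI,0),(0,GS,0)] = SM 1 []"
  using r_SiS by (simp add: rsimps cmp_assoc)
lemma b_I1: "SM 1 [(0,GM,0),(1,GL,0)] = SM 1 [(0,GL,0),(0,GE,0)]"
  using r_I1 by (simp add: rsimps cmp_assoc)
lemma b_I2: "SM 1 [(0,Gl,1),(0,GD,0)] = SM 1 [(0,GU,0),(0,Gl,0)]"
  using r_I2 by (simp add: rsimps cmp_assoc)
lemma b_I3: "SM 0 [(0,Gl,0),(0,GL,0)] = SM 0 []"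
  using r_I3 by (simp add: rsimps cmp_assoc)

lemma b_YY: "SM 2 [(0,GY,0),(0,GY,0)] = SM 2 []"
  using sy_inv[of A A] by (simp add: rsimps)
lemma b_YS1: "g = GS \<or> g = GI \<Longrightarrow> SM 2 [(0,GY,0),(0,g,1)] = SM 2 [(1,g,0),(0,GY,0)]"
  using sy_nat[of an A A ii A A] sy_nat[of ai A A ii A A] h_an h_ai id_hom[of A]
  by (auto simp: rsimps)
lemma b_YS2: "g = GS \<or> g = GI \<Longrightarrow> SM 2 [(0,GY,0),(1,g,0)] = SM 2 [(0,g,1),(0,GY,0)]"
  using sy_nat[of ii A A an A A] sy_nat[of ii A A ai A A] h_an h_ai id_hom[of A]
  by (auto simp: rsimps)
lemma b_YL: "SM 1 [(0,GY,0),(1,GL,0)] = SM 1 [(0,GL,1)]"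
  using sy_nat[of ii A A Lam "Unt C" A] h_Lam id_hom[of A]
  by (auto simp: rsimps sy_unit_r)
lemma b_Yl: "SM 2 [(0,Gl,1)] = SM 2 [(1,Gl,0),(0,GY,0)]"
  using sy_nat[of lam A "Unt C" ii A A] h_lam id_hom[of A]
  by (auto simp: rsimps sy_unit_l)
lemma b_Yd: "SM 2 [(1,GY,0),(0,GY,1),(1,GD,0)] = SM 2 [(0,GD,1),(0,GY,0)]"
  using sy_nat[of ii A A de A "TnO C A A"] h_de id_hom[of A] hex1[of A A A]
  by (auto simp: rsimps cmp_assoc Lay_def)

lemma b_Yml: "SM 3 [(0,Gl,1),(0,GM,1),(1,GY,0)] = SM 3 [(1,Gl,0),(1,GM,0),(0,GY,1)]"
proof -
  define h where "h = Cmp C lam mu"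
  have hh: "hom C h (TnO C A A) (Unt C)" unfolding h_def by (simp add: hom_def)
  have ht[simp]: "h \<in> Ar C" "Dom C h = TnO C A A" "Cod C h = Unt C" using hh by (auto simp: hom_def)
  have 1: "TnM C h ii = Cmp C (TnM C ii h) (Cmp C (TnM C sg ii) (TnM C ii sg))"
    using sy_nat[OF hh id_hom[of A]] hex2[of A A A] by (simp add: sy_unit_l)
  have 2: "TnM C h ii = Cmp C (TnM C lam ii) (TnM C mu ii)" unfolding h_def by (simp add: interch)
  have 3: "TnM C ii h = Cmp C (TnM C ii lam) (TnM C ii mu)" unfolding h_def by (simp add: interch)
  have 4: "Cmp C (TnM C ii sg) (TnM C ii sg) = Idm C (TnO C A (TnO C A A))"
    by (simp add: interch sy_inv tn_id)
  have "Cmp C (TnM C lam ii) (Cmp C (TnM C mu ii) (TnM C ii sg))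
      = Cmp C (TnM C h ii) (TnM C ii sg)" using 2 by (simp add: cmp_assoc)
  also have "\<dots> = Cmp C (TnM C ii h) (Cmp C (TnM C sg ii) (Cmp C (TnM C ii sg) (TnM C ii sg)))"
    unfolding 1 by (simp add: cmp_assoc)
  also have "\<dots> = Cmp C (TnM C ii lam) (Cmp C (TnM C ii mu) (TnM C sg ii))"
    unfolding 4 3 by (simp add: cmp_assoc)
  finally show ?thesis by (simp add: rsimps)
qed

lemma b_F: "SM 1 [(0,GF,0)] = SM 1 [(0,GM,1),(2,GS,0),(1,GD,0),(1,GL,0)]"
proof -
  have 1: "TnM C mu an = Cmp C (TnM C mu ii) (TnM C (Idm C (TnO C A A)) an)" by (simp add: interch)
  have 2: "TnM C ii (Cmp C de Lam) = Cmp C (TnM C ii de) (TnM C ii Lam)" by (simp add: interch)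
  show ?thesis by (simp add: rsimps frob_comult_def 1 2 cmp_assoc)
qed

end

definition opr :: "('o,'m) smc \<Rightarrow> ('o,'m) smc" where
  "opr C = \<lparr>Ob = Ob C, Ar = Ar C, Dom = Cod C, Cod = Dom C, Idm = Idm C,
     Cmp = (\<lambda>g f. Cmp C f g), TnO = (\<lambda>A B. TnO C B A), TnM = (\<lambda>f g. TnM C g f),
     Unt = Unt C, Sy = Sy C\<rparr>"

definition dualH :: "('o,'m) int_hopf \<Rightarrow> ('o,'m) int_hopf" where
  "dualH H = H\<lparr>hm := hD H, hu := he H, hD := hm H, he := hu H, hL := hl H, hl := hL H\<rparr>"

lemma opr_sel[simp]: "Ob (opr C) = Ob C" "Ar (opr C) = Ar C" "Dom (opr C) = Cod C" "Cod (opr C) = Dom C"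
  "Idm (opr C) = Idm C" "Cmp (opr C) g f = Cmp C f g" "TnO (opr C) A B = TnO C B A"
  "TnM (opr C) f g = TnM C g f" "Unt (opr C) = Unt C" "Sy (opr C) = Sy C"
  by (simp_all add: opr_def)

lemma hom_opr[simp]: "hom (opr C) f A B = hom C f B A" by (auto simp: hom_def)

lemma dualH_sel[simp]: "hob (dualH H) = hob H" "hm (dualH H) = hD H" "hu (dualH H) = he H"
  "hD (dualH H) = hm H" "he (dualH H) = hu H" "hS (dualH H) = hS H" "hSi (dualH H) = hSi H"
  "hL (dualH H) = hl H" "hl (dualH H) = hL H"
  by (simp_all add: dualH_def)

context smcl begin

lemma smc_opr: "strict_symmetric_monoidal_cat (opr C)"
  unfolding strict_symmetric_monoidal_cat_def
proof (intro conjI allI impI ballI, goal_cases)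
  case 1 then show ?case by simp
next case 2 then show ?case by simp
next case 3 then show ?case by (simp add: id_hom)
next case 4 then show ?case by (simp add: cmp_hom)
next case 5 then show ?case by (simp add: cmp_assoc_h)
next case 6 then show ?case using id_lr by simp
next case 7 then show ?case using id_lr by simp
next case 8 then show ?case by simp
next case 9 then show ?case by simp
next case 10 then show ?case by (simp add: tn_hom)
next case 11 then show ?case by (simp add: tn_id)
next case 12 then show ?case by (simp add: interchange)
next case 13 then show ?case by simp
next case 14 then show ?case by simp
next case 15 then show ?case by simp
next case 16 then show ?case by (simp add: tn_assoc)
next case 17 then show ?case by simp
next case 18 then show ?case by simp
next case 19 then show ?case by (simp add: sy_hom)
next case 20 then show ?case by (simp add: sy_nat)
next case 21 then show ?case by (simp add: sy_inv)
next case 22 then show ?case by (simp add: hex1)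
next case 23 then show ?case by (simp add: hex2)
qed

end

context ihopf begin

lemma dual_ih: "is_int_hopf (opr C) (dualH H)"
  unfolding is_int_hopf_def Let_def is_algebra_def is_coalgebra_def
  using h_mu h_un h_de h_ep h_an h_ai h_Lam h_lam
  apply (simp add: r_coassoc r_counitL r_counitR r_assoc r_unitL r_unitR r_em r_du r_eu
      r_SSi r_SiS r_I1 r_I2 r_I3 cmp_assoc tn_assoc r_bialg)
  using r_H1 r_H2 by (simp add: cmp_assoc)

end

context ihopf begin

lemmas b_YSS1 = b_YS1[of GS, simplified]
lemmas b_YSI1 = b_YS1[of GI, simplified]
lemmas b_YSS2 = b_YS2[of GS, simplified]
lemmas b_YSI2 = b_YS2[of GI, simplified]

lemma b_L: "SM 1 [(0,Gl,1),(0,GM,1),(2,GS,0),(1,GD,0),(1,GL,0)] = SM 1 []"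
proof -
  have "SM 1 [(0,Gl,1),(0,GM,1),(2,GS,0),(1,GD,0),(1,GL,0)] = SM 1 [(0,GM,0),(0,GU,1),(0,Gl,1),(0,GM,1),(2,GS,0),(1,GD,0),(1,GL,0)]"
    by (rule rep_sh[OF b_unitL[symmetric], of 0 _ _ 0 0]) simp_all
  also have "\<dots> = SM 1 [(0,GM,0),(0,Gl,2),(0,GD,1),(0,GM,1),(2,GS,0),(1,GD,0),(1,GL,0)]"
    by (rule rep_sh[OF b_I2[symmetric], of 1 _ _ 0 1]) simp_all
  also have "\<dots> = SM 1 [(0,GM,0),(0,Gl,2),(0,GM,2),(2,GM,1),(1,GY,2),(0,GD,3),(1,GD,1),(2,GS,0),(1,GD,0),(1,GL,0)]"
    by (rule rep_sh[OF b_bialg, of 2 _ _ 0 1]) simp_all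
  also have "\<dots> = SM 1 [(0,GM,0),(0,Gl,2),(0,GM,2),(2,GM,1),(1,GY,2),(0,GD,3),(3,GS,0),(1,GD,1),(1,GD,0),(1,GL,0)]"
    by (rule rep_sh[OF exch[of GD 0 GS], of 6 _ _ 1 0]) simp_all
  also have "\<dots> = SM 1 [(0,GM,0),(0,Gl,2),(0,GM,2),(2,GM,1),(1,GY,2),(0,GD,3),(3,GS,0),(2,GD,0),(1,GD,0),(1,GL,0)]"
    by (rule rep_sh[OF b_coassoc, of 7 _ _ 1 0]) simp_all
  also have "\<dots> = SM 1 [(0,GM,0),(0,Gl,2),(1,GM,1),(0,GM,3),(1,GY,2),(0,GD,3),(3,GS,0),(2,GD,0),(1,GD,0),(1,GL,0)]"
    by (rule rep_sh[OF exch[of GM 0 GM], of 2 _ _ 0 1]) simp_all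
  also have "\<dots> = SM 1 [(0,GM,0),(0,GM,1),(0,Gl,3),(0,GM,3),(1,GY,2),(0,GD,3),(3,GS,0),(2,GD,0),(1,GD,0),(1,GL,0)]"
    by (rule rep_sh[OF exch[of Gl 0 GM], of 1 _ _ 0 1]) simp_all
  also have "\<dots> = SM 1 [(0,GM,0),(1,GM,0),(0,Gl,3),(0,GM,3),(1,GY,2),(0,GD,3),(3,GS,0),(2,GD,0),(1,GD,0),(1,GL,0)]"
    by (rule rep_sh[OF b_assoc, of 0 _ _ 0 0]) simp_all
  also have "\<dots> = SM 1 [(0,GM,0),(0,Gl,2),(2,GM,0),(0,GM,3),(1,GY,2),(0,GD,3),(3,GS,0),(2,GD,0),(1,GD,0),(1,GL,0)]"
    by (rule rep_sh[OF exch[of Gl 1 GM, symmetric], of 1 _ _ 0 0]) simp_all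
  also have "\<dots> = SM 1 [(0,GM,0),(0,Gl,2),(0,GM,2),(3,GM,0),(1,GY,2),(0,GD,3),(3,GS,0),(2,GD,0),(1,GD,0),(1,GL,0)]"
    by (rule rep_sh[OF exch[of GM 1 GM, symmetric], of 2 _ _ 0 0]) simp_all
  also have "\<dots> = SM 1 [(0,GM,0),(0,Gl,2),(0,GM,2),(1,GY,1),(3,GM,0),(0,GD,3),(3,GS,0),(2,GD,0),(1,GD,0),(1,GL,0)]"
    by (rule rep_sh[OF exch[of GY 0 GM, symmetric], of 3 _ _ 1 0]) simp_all
  also have "\<dots> = SM 1 [(0,GM,0),(0,Gl,2),(0,GM,2),(1,GY,1),(0,GD,2),(2,GM,0),(3,GS,0),(2,GD,0),(1,GD,0),(1,GL,0)]"
    by (rule rep_sh[OF exch[of GD 1 GM, symmetric], of 4 _ _ 0 0]) simp_all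
  also have "\<dots> = SM 1 [(0,GM,0),(0,Gl,2),(0,GM,2),(1,GY,1),(0,GD,2),(2,GU,0),(2,GE,0),(1,GD,0),(1,GL,0)]"
    by (rule rep_sh[OF b_H2, of 5 _ _ 2 0]) simp_all
  also have "\<dots> = SM 1 [(0,GM,0),(0,Gl,2),(0,GM,2),(1,GY,1),(0,GD,2),(2,GU,0),(1,GL,0)]"
    by (rule rep_sh[OF b_counitR, of 6 _ _ 1 0]) simp_all
  also have "\<dots> = SM 1 [(0,GM,0),(0,Gl,2),(0,GM,2),(1,GY,1),(3,GU,0),(0,GD,1),(1,GL,0)]"
    by (rule rep_sh[OF exch[of GD 1 GU], of 4 _ _ 0 0]) simp_all
  also have "\<dots> = SM 1 [(0,GM,0),(0,Gl,2),(0,GM,2),(3,GU,0),(1,GY,0),(0,GD,1),(1,GL,0)]"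
    by (rule rep_sh[OF exch[of GY 0 GU], of 3 _ _ 1 0]) simp_all
  also have "\<dots> = SM 1 [(0,GM,0),(0,Gl,2),(2,GU,0),(0,GM,1),(1,GY,0),(0,GD,1),(1,GL,0)]"
    by (rule rep_sh[OF exch[of GM 1 GU], of 2 _ _ 0 0]) simp_all
  also have "\<dots> = SM 1 [(0,GM,0),(1,GU,0),(0,Gl,1),(0,GM,1),(1,GY,0),(0,GD,1),(1,GL,0)]"
    by (rule rep_sh[OF exch[of Gl 1 GU], of 1 _ _ 0 0]) simp_all
  also have "\<dots> = SM 1 [(0,Gl,1),(0,GM,1),(1,GY,0),(0,GD,1),(1,GL,0)]"
    by (rule rep_sh[OF b_unitR, of 0 _ _ 0 0]) simp_all
  also have "\<dots> = SM 1 [(0,Gl,1),(0,GM,1),(1,GY,0),(2,GL,0),(0,GD,0)]"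
    by (rule rep_sh[OF exch[of GD 0 GL], of 3 _ _ 0 0]) simp_all
  also have "\<dots> = SM 1 [(0,Gl,1),(0,GM,1),(1,GL,1),(0,GD,0)]"
    by (rule rep_sh[OF b_YL, of 2 _ _ 1 0]) simp_all
  also have "\<dots> = SM 1 [(0,Gl,1),(0,GL,1),(0,GE,1),(0,GD,0)]"
    by (rule rep_sh[OF b_I1, of 1 _ _ 0 1]) simp_all
  also have "\<dots> = SM 1 [(0,GE,1),(0,GD,0)]"
    by (rule rep_sh[OF b_I3, of 0 _ _ 0 1]) simp_all
  also have "\<dots> = SM 1 []"
    by (rule rep_sh[OF b_counitL, of 0 _ _ 0 0]) simp_all
  finally show ?thesis .
qed
lemma b_Jr: "SM 1 [(0,GM,1),(0,GS,2),(1,GD,0),(1,GL,0)] = SM 1 [(1,GM,0),(0,GY,1),(1,GD,0),(1,GL,0)]"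
proof -
  have "SM 1 [(0,GM,1),(0,GS,2),(1,GD,0),(1,GL,0)] = SM 1 [(0,GM,1),(0,GS,2),(1,GD,0),(1,GL,0),(1,GE,0),(0,GD,0)]"
    by (rule rep_sh[OF b_counitR[symmetric], of 4 _ _ 0 0]) simp_all
  also have "\<dots> = SM 1 [(0,GM,1),(0,GS,2),(1,GD,0),(1,GM,0),(2,GL,0),(0,GD,0)]"
    by (rule rep_sh[OF b_I1[symmetric], of 3 _ _ 1 0]) simp_all
  also have "\<dots> = SM 1 [(0,GM,1),(0,GS,2),(1,GM,1),(3,GM,0),(2,GY,1),(1,GD,2),(2,GD,0),(2,GL,0),(0,GD,0)]"
    by (rule rep_sh[OF b_bialg, of 2 _ _ 1 0]) simp_all
  also have "\<dots> = SM 1 [(0,GM,1),(1,GM,1),(0,GS,3),(3,GM,0),(2,GY,1),(1,GD,2),(2,GD,0),(2,GL,0),(0,GD,0)]"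
    by (rule rep_sh[OF exch[of GS 0 GM], of 1 _ _ 0 1]) simp_all
  also have "\<dots> = SM 1 [(0,GM,1),(0,GM,2),(0,GS,3),(3,GM,0),(2,GY,1),(1,GD,2),(2,GD,0),(2,GL,0),(0,GD,0)]"
    by (rule rep_sh[OF b_assoc[symmetric], of 0 _ _ 0 1]) simp_all
  also have "\<dots> = SM 1 [(0,GM,1),(0,GM,2),(0,GS,3),(3,GM,0),(2,GY,1),(3,GD,0),(1,GD,1),(2,GL,0),(0,GD,0)]"
    by (rule rep_sh[OF exch[of GD 0 GD], of 5 _ _ 1 0]) simp_all
  also have "\<dots> = SM 1 [(0,GM,1),(0,GM,2),(0,GS,3),(3,GM,0),(2,GY,1),(3,GD,0),(3,GL,0),(1,GD,0),(0,GD,0)]"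
    by (rule rep_sh[OF exch[of GD 0 GL], of 6 _ _ 1 0]) simp_all
  also have "\<dots> = SM 1 [(0,GM,1),(0,GM,2),(0,GS,3),(3,GM,0),(2,GY,1),(3,GD,0),(3,GL,0),(0,GD,1),(0,GD,0)]"
    by (rule rep_sh[OF b_coassoc[symmetric], of 7 _ _ 0 0]) simp_all
  also have "\<dots> = SM 1 [(0,GM,1),(0,GM,2),(3,GM,0),(0,GS,4),(2,GY,1),(3,GD,0),(3,GL,0),(0,GD,1),(0,GD,0)]"
    by (rule rep_sh[OF exch[of GS 2 GM], of 2 _ _ 0 0]) simp_all
  also have "\<dots> = SM 1 [(0,GM,1),(0,GM,2),(3,GM,0),(2,GY,1),(0,GS,4),(3,GD,0),(3,GL,0),(0,GD,1),(0,GD,0)]"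
    by (rule rep_sh[OF exch[of GS 1 GY], of 3 _ _ 0 1]) simp_all
  also have "\<dots> = SM 1 [(0,GM,1),(0,GM,2),(3,GM,0),(2,GY,1),(3,GD,0),(0,GS,3),(3,GL,0),(0,GD,1),(0,GD,0)]"
    by (rule rep_sh[OF exch[of GS 2 GD], of 4 _ _ 0 0]) simp_all
  also have "\<dots> = SM 1 [(0,GM,1),(0,GM,2),(3,GM,0),(2,GY,1),(3,GD,0),(3,GL,0),(0,GS,2),(0,GD,1),(0,GD,0)]"
    by (rule rep_sh[OF exch[of GS 2 GL], of 5 _ _ 0 0]) simp_all
  also have "\<dots> = SM 1 [(0,GM,1),(2,GM,0),(0,GM,3),(2,GY,1),(3,GD,0),(3,GL,0),(0,GS,2),(0,GD,1),(0,GD,0)]"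
    by (rule rep_sh[OF exch[of GM 1 GM], of 1 _ _ 0 0]) simp_all
  also have "\<dots> = SM 1 [(0,GM,1),(2,GM,0),(1,GY,1),(0,GM,3),(3,GD,0),(3,GL,0),(0,GS,2),(0,GD,1),(0,GD,0)]"
    by (rule rep_sh[OF exch[of GM 0 GY], of 2 _ _ 0 1]) simp_all
  also have "\<dots> = SM 1 [(0,GM,1),(2,GM,0),(1,GY,1),(2,GD,0),(0,GM,2),(3,GL,0),(0,GS,2),(0,GD,1),(0,GD,0)]"
    by (rule rep_sh[OF exch[of GM 1 GD], of 3 _ _ 0 0]) simp_all
  also have "\<dots> = SM 1 [(0,GM,1),(2,GM,0),(1,GY,1),(2,GD,0),(2,GL,0),(0,GM,1),(0,GS,2),(0,GD,1),(0,GD,0)]"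
    by (rule rep_sh[OF exch[of GM 1 GL], of 4 _ _ 0 0]) simp_all
  also have "\<dots> = SM 1 [(0,GM,1),(2,GM,0),(1,GY,1),(2,GD,0),(2,GL,0),(0,GU,1),(0,GE,1),(0,GD,0)]"
    by (rule rep_sh[OF b_H1, of 5 _ _ 0 1]) simp_all
  also have "\<dots> = SM 1 [(0,GM,1),(2,GM,0),(1,GY,1),(2,GD,0),(2,GL,0),(0,GU,1)]"
    by (rule rep_sh[OF b_counitL, of 6 _ _ 0 0]) simp_all
  also have "\<dots> = SM 1 [(0,GM,1),(2,GM,0),(1,GY,1),(2,GD,0),(0,GU,2),(1,GL,0)]"
    by (rule rep_sh[OF exch[of GU 1 GL, symmetric], of 4 _ _ 0 0]) simp_all
  also have "\<dots> = SM 1 [(0,GM,1),(2,GM,0),(1,GY,1),(0,GU,3),(1,GD,0),(1,GL,0)]"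
    by (rule rep_sh[OF exch[of GU 1 GD, symmetric], of 3 _ _ 0 0]) simp_all
  also have "\<dots> = SM 1 [(0,GM,1),(2,GM,0),(0,GU,3),(0,GY,1),(1,GD,0),(1,GL,0)]"
    by (rule rep_sh[OF exch[of GU 0 GY, symmetric], of 2 _ _ 0 1]) simp_all
  also have "\<dots> = SM 1 [(0,GM,1),(0,GU,2),(1,GM,0),(0,GY,1),(1,GD,0),(1,GL,0)]"
    by (rule rep_sh[OF exch[of GU 1 GM, symmetric], of 1 _ _ 0 0]) simp_all
  also have "\<dots> = SM 1 [(1,GM,0),(0,GY,1),(1,GD,0),(1,GL,0)]"
    by (rule rep_sh[OF b_unitL, of 0 _ _ 0 1]) simp_all
  finally show ?thesis .
qed
lemma b_Jp: "SM 1 [(0,GM,1),(1,GD,0),(1,GL,0)] = SM 1 [(1,GM,0),(1,GI,1),(0,GY,1),(1,GD,0),(1,GL,0)]"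
proof -
  have "SM 1 [(0,GM,1),(1,GD,0),(1,GL,0)] = SM 1 [(0,GM,1),(1,GD,0),(1,GL,0),(0,GS,0),(0,GI,0)]"
    by (rule rep_sh[OF b_SSi[symmetric], of 3 _ _ 0 0]) simp_all
  also have "\<dots> = SM 1 [(0,GM,1),(1,GD,0),(0,GS,1),(1,GL,0),(0,GI,0)]"
    by (rule rep_sh[OF exch[of GS 0 GL, symmetric], of 2 _ _ 0 0]) simp_all
  also have "\<dots> = SM 1 [(0,GM,1),(0,GS,2),(1,GD,0),(1,GL,0),(0,GI,0)]"
    by (rule rep_sh[OF exch[of GS 0 GD, symmetric], of 1 _ _ 0 0]) simp_all
  also have "\<dots> = SM 1 [(1,GM,0),(0,GY,1),(1,GD,0),(1,GL,0),(0,GI,0)]"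
    by (rule rep_sh[OF b_Jr, of 0 _ _ 0 0]) simp_all
  also have "\<dots> = SM 1 [(1,GM,0),(0,GY,1),(1,GD,0),(0,GI,1),(1,GL,0)]"
    by (rule rep_sh[OF exch[of GI 0 GL, symmetric], of 3 _ _ 0 0]) simp_all
  also have "\<dots> = SM 1 [(1,GM,0),(0,GY,1),(0,GI,2),(1,GD,0),(1,GL,0)]"
    by (rule rep_sh[OF exch[of GI 0 GD, symmetric], of 2 _ _ 0 0]) simp_all
  also have "\<dots> = SM 1 [(1,GM,0),(1,GI,1),(0,GY,1),(1,GD,0),(1,GL,0)]"
    by (rule rep_sh[OF b_YSI1, of 1 _ _ 0 1]) simp_all
  finally show ?thesis .
qed
lemma b_ST: "SM 1 [(0,GS,0),(0,Gl,1),(0,GM,1),(1,GD,0),(1,GL,0)] = SM 1 []"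
proof -
  have "SM 1 [(0,GS,0),(0,Gl,1),(0,GM,1),(1,GD,0),(1,GL,0)] = SM 1 [(0,Gl,1),(1,GS,0),(0,GM,1),(1,GD,0),(1,GL,0)]"
    by (rule rep_sh[OF exch[of Gl 0 GS, symmetric], of 0 _ _ 0 0]) simp_all
  also have "\<dots> = SM 1 [(0,Gl,1),(0,GM,1),(2,GS,0),(1,GD,0),(1,GL,0)]"
    by (rule rep_sh[OF exch[of GM 0 GS, symmetric], of 1 _ _ 0 0]) simp_all
  also have "\<dots> = SM 1 []"
    by (rule rep_sh[OF b_L, of 0 _ _ 0 0]) simp_all
  finally show ?thesis .
qed
lemma b_SiF: "SM 1 [(0,GI,0)] = SM 1 [(0,Gl,1),(0,GM,1),(1,GD,0),(1,GL,0)]"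
proof -
  have "SM 1 [(0,GI,0)] = SM 1 [(0,GI,0),(0,GS,0),(0,Gl,1),(0,GM,1),(1,GD,0),(1,GL,0)]"
    by (rule rep_sh[OF b_ST[symmetric], of 1 _ _ 0 0]) simp_all
  also have "\<dots> = SM 1 [(0,Gl,1),(0,GM,1),(1,GD,0),(1,GL,0)]"
    by (rule rep_sh[OF b_SiS, of 0 _ _ 0 0]) simp_all
  finally show ?thesis .
qed
lemma b_F5: "SM 2 [(0,GI,0),(0,GM,0)] = SM 2 [(0,GM,0),(0,GI,1),(1,GI,0),(0,GY,0)]"
proof -
  have "SM 2 [(0,GI,0),(0,GM,0)] = SM 2 [(0,Gl,1),(0,GM,1),(1,GD,0),(1,GL,0),(0,GM,0)]"
    by (rule rep_sh[OF b_SiF, of 0 _ _ 0 0]) simp_all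
  also have "\<dots> = SM 2 [(0,Gl,1),(0,GM,1),(1,GD,0),(0,GM,1),(2,GL,0)]"
    by (rule rep_sh[OF exch[of GM 0 GL, symmetric], of 3 _ _ 0 0]) simp_all
  also have "\<dots> = SM 2 [(0,Gl,1),(0,GM,1),(0,GM,2),(2,GD,0),(2,GL,0)]"
    by (rule rep_sh[OF exch[of GM 0 GD, symmetric], of 2 _ _ 0 0]) simp_all
  also have "\<dots> = SM 2 [(0,Gl,1),(0,GM,1),(1,GM,1),(2,GD,0),(2,GL,0)]"
    by (rule rep_sh[OF b_assoc, of 1 _ _ 0 1]) simp_all
  also have "\<dots> = SM 2 [(0,Gl,1),(0,GM,1),(2,GM,0),(2,GI,1),(1,GY,1),(2,GD,0),(2,GL,0)]"
    by (rule rep_sh[OF b_Jp, of 2 _ _ 1 0]) simp_all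
  also have "\<dots> = SM 2 [(0,Gl,1),(1,GM,0),(0,GM,2),(2,GI,1),(1,GY,1),(2,GD,0),(2,GL,0)]"
    by (rule rep_sh[OF exch[of GM 0 GM], of 1 _ _ 0 0]) simp_all
  also have "\<dots> = SM 2 [(0,GM,0),(0,Gl,2),(0,GM,2),(2,GI,1),(1,GY,1),(2,GD,0),(2,GL,0)]"
    by (rule rep_sh[OF exch[of Gl 0 GM], of 0 _ _ 0 0]) simp_all
  also have "\<dots> = SM 2 [(0,GM,0),(0,Gl,2),(1,GI,1),(0,GM,2),(1,GY,1),(2,GD,0),(2,GL,0)]"
    by (rule rep_sh[OF exch[of GM 0 GI], of 2 _ _ 0 1]) simp_all
  also have "\<dots> = SM 2 [(0,GM,0),(0,GI,1),(0,Gl,2),(0,GM,2),(1,GY,1),(2,GD,0),(2,GL,0)]"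
    by (rule rep_sh[OF exch[of Gl 0 GI], of 1 _ _ 0 1]) simp_all
  also have "\<dots> = SM 2 [(0,GM,0),(0,GI,1),(1,Gl,1),(1,GM,1),(0,GY,2),(2,GD,0),(2,GL,0)]"
    by (rule rep_sh[OF b_Yml, of 2 _ _ 0 1]) simp_all
  also have "\<dots> = SM 2 [(0,GM,0),(0,GI,1),(1,Gl,1),(1,GM,1),(2,GD,0),(0,GY,1),(2,GL,0)]"
    by (rule rep_sh[OF exch[of GY 0 GD], of 4 _ _ 0 0]) simp_all
  also have "\<dots> = SM 2 [(0,GM,0),(0,GI,1),(1,Gl,1),(1,GM,1),(2,GD,0),(2,GL,0),(0,GY,0)]"
    by (rule rep_sh[OF exch[of GY 0 GL], of 5 _ _ 0 0]) simp_all
  also have "\<dots> = SM 2 [(0,GM,0),(0,GI,1),(1,GI,0),(0,GY,0)]"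
    by (rule rep_sh[OF b_SiF[symmetric], of 2 _ _ 1 0]) simp_all
  finally show ?thesis .
qed

lemma b_F5p: "SM 2 [(0,GM,0),(0,GI,1),(1,GI,0)] = SM 2 [(0,GI,0),(0,GM,0),(0,GY,0)]"
proof -
  have "SM 2 [(0,GM,0),(0,GI,1),(1,GI,0)] = SM 2 [(0,GM,0),(0,GI,1),(1,GI,0),(0,GY,0),(0,GY,0)]"
    by (rule rep_sh[OF b_YY[symmetric], of 3 _ _ 0 0]) simp_all
  also have "\<dots> = SM 2 [(0,GI,0),(0,GM,0),(0,GY,0)]"
    by (rule rep_sh[OF b_F5[symmetric], of 0 _ _ 0 0]) simp_all
  finally show ?thesis .
qed
lemma b_F6: "SM 2 [(0,GS,0),(0,GM,0)] = SM 2 [(0,GM,0),(0,GS,1),(1,GS,0),(0,GY,0)]"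
proof -
  have "SM 2 [(0,GS,0),(0,GM,0)] = SM 2 [(0,GS,0),(0,GM,0),(0,GI,1),(0,GS,1)]"
    by (rule rep_sh[OF b_SiS[symmetric], of 2 _ _ 0 1]) simp_all
  also have "\<dots> = SM 2 [(0,GS,0),(0,GM,0),(0,GI,1),(0,GS,1),(1,GI,0),(1,GS,0)]"
    by (rule rep_sh[OF b_SiS[symmetric], of 4 _ _ 1 0]) simp_all
  also have "\<dots> = SM 2 [(0,GS,0),(0,GM,0),(0,GI,1),(1,GI,0),(0,GS,1),(1,GS,0)]"
    by (rule rep_sh[OF exch[of GS 0 GI], of 3 _ _ 0 0]) simp_all
  also have "\<dots> = SM 2 [(0,GS,0),(0,GI,0),(0,GM,0),(0,GY,0),(0,GS,1),(1,GS,0)]"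
    by (rule rep_sh[OF b_F5p, of 1 _ _ 0 0]) simp_all
  also have "\<dots> = SM 2 [(0,GM,0),(0,GY,0),(0,GS,1),(1,GS,0)]"
    by (rule rep_sh[OF b_SSi, of 0 _ _ 0 0]) simp_all
  also have "\<dots> = SM 2 [(0,GM,0),(1,GS,0),(0,GY,0),(1,GS,0)]"
    by (rule rep_sh[OF b_YSS1, of 1 _ _ 0 0]) simp_all
  also have "\<dots> = SM 2 [(0,GM,0),(1,GS,0),(0,GS,1),(0,GY,0)]"
    by (rule rep_sh[OF b_YSS2, of 2 _ _ 0 0]) simp_all
  also have "\<dots> = SM 2 [(0,GM,0),(0,GS,1),(1,GS,0),(0,GY,0)]"
    by (rule rep_sh[OF exch[of GS 0 GS, symmetric], of 1 _ _ 0 0]) simp_all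
  finally show ?thesis .
qed
lemma b_F6p: "SM 2 [(0,GM,0),(0,GS,1),(1,GS,0)] = SM 2 [(0,GS,0),(0,GM,0),(0,GY,0)]"
proof -
  have "SM 2 [(0,GM,0),(0,GS,1),(1,GS,0)] = SM 2 [(0,GM,0),(0,GS,1),(1,GS,0),(0,GY,0),(0,GY,0)]"
    by (rule rep_sh[OF b_YY[symmetric], of 3 _ _ 0 0]) simp_all
  also have "\<dots> = SM 2 [(0,GS,0),(0,GM,0),(0,GY,0)]"
    by (rule rep_sh[OF b_F6[symmetric], of 0 _ _ 0 0]) simp_all
  finally show ?thesis .
qed
lemma b_Su0: "SM 0 [(0,GU,0)] = SM 0 [(0,GS,0),(0,GU,0)]"
proof -
  have "SM 0 [(0,GU,0)] = SM 0 [(0,GU,0),(0,GE,0),(0,GU,0)]"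
    by (rule rep_sh[OF b_eu[symmetric], of 1 _ _ 0 0]) simp_all
  also have "\<dots> = SM 0 [(0,GM,0),(0,GS,1),(0,GD,0),(0,GU,0)]"
    by (rule rep_sh[OF b_H1[symmetric], of 0 _ _ 0 0]) simp_all
  also have "\<dots> = SM 0 [(0,GM,0),(0,GS,1),(0,GU,1),(0,GU,0)]"
    by (rule rep_sh[OF b_du, of 2 _ _ 0 0]) simp_all
  also have "\<dots> = SM 0 [(0,GM,0),(0,GS,1),(1,GU,0),(0,GU,0)]"
    by (rule rep_sh[OF exch[of GU 0 GU], of 2 _ _ 0 0]) simp_all
  also have "\<dots> = SM 0 [(0,GM,0),(1,GU,0),(0,GS,0),(0,GU,0)]"
    by (rule rep_sh[OF exch[of GS 0 GU], of 1 _ _ 0 0]) simp_all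
  also have "\<dots> = SM 0 [(0,GS,0),(0,GU,0)]"
    by (rule rep_sh[OF b_unitR, of 0 _ _ 0 0]) simp_all
  finally show ?thesis .
qed
lemma b_Siu: "SM 0 [(0,GI,0),(0,GU,0)] = SM 0 [(0,GU,0)]"
proof -
  have "SM 0 [(0,GI,0),(0,GU,0)] = SM 0 [(0,GI,0),(0,GS,0),(0,GU,0)]"
    by (rule rep_sh[OF b_Su0, of 1 _ _ 0 0]) simp_all
  also have "\<dots> = SM 0 [(0,GU,0)]"
    by (rule rep_sh[OF b_SiS, of 0 _ _ 0 0]) simp_all
  finally show ?thesis .
qed
lemma b_Kr: "SM 1 [(1,GM,0),(1,GS,1),(0,GD,1),(0,GL,1)] = SM 1 [(0,GM,1),(2,GS,0),(1,GD,0),(1,GL,0)]"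
proof -
  have "SM 1 [(1,GM,0),(1,GS,1),(0,GD,1),(0,GL,1)] = SM 1 [(1,GM,0),(1,GS,1),(2,GS,0),(2,GI,0),(0,GD,1),(0,GL,1)]"
    by (rule rep_sh[OF b_SSi[symmetric], of 2 _ _ 2 0]) simp_all
  also have "\<dots> = SM 1 [(1,GS,0),(1,GM,0),(1,GY,0),(2,GI,0),(0,GD,1),(0,GL,1)]"
    by (rule rep_sh[OF b_F6p, of 0 _ _ 1 0]) simp_all
  also have "\<dots> = SM 1 [(1,GS,0),(1,GM,0),(1,GY,0),(2,GI,0),(0,GD,1),(0,GY,0),(1,GL,0)]"
    by (rule rep_sh[OF b_YL[symmetric], of 5 _ _ 0 0]) simp_all
  also have "\<dots> = SM 1 [(1,GS,0),(1,GM,0),(1,GY,0),(0,GD,1),(1,GI,0),(0,GY,0),(1,GL,0)]"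
    by (rule rep_sh[OF exch[of GD 0 GI, symmetric], of 3 _ _ 0 0]) simp_all
  also have "\<dots> = SM 1 [(1,GS,0),(1,GM,0),(1,GY,0),(0,GD,1),(0,GY,0),(0,GI,1),(1,GL,0)]"
    by (rule rep_sh[OF b_YSI1[symmetric], of 4 _ _ 0 0]) simp_all
  also have "\<dots> = SM 1 [(1,GS,0),(1,GM,0),(1,GY,0),(1,GY,0),(0,GY,1),(1,GD,0),(0,GI,1),(1,GL,0)]"
    by (rule rep_sh[OF b_Yd[symmetric], of 3 _ _ 0 0]) simp_all
  also have "\<dots> = SM 1 [(1,GS,0),(1,GM,0),(0,GY,1),(1,GD,0),(0,GI,1),(1,GL,0)]"
    by (rule rep_sh[OF b_YY, of 2 _ _ 1 0]) simp_all
  also have "\<dots> = SM 1 [(1,GS,0),(1,GM,0),(0,GY,1),(0,GI,2),(1,GD,0),(1,GL,0)]"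
    by (rule rep_sh[OF exch[of GI 0 GD, symmetric], of 3 _ _ 0 0]) simp_all
  also have "\<dots> = SM 1 [(1,GS,0),(1,GM,0),(1,GI,1),(0,GY,1),(1,GD,0),(1,GL,0)]"
    by (rule rep_sh[OF b_YSI1, of 2 _ _ 0 1]) simp_all
  also have "\<dots> = SM 1 [(1,GS,0),(0,GM,1),(1,GD,0),(1,GL,0)]"
    by (rule rep_sh[OF b_Jp[symmetric], of 1 _ _ 0 0]) simp_all
  also have "\<dots> = SM 1 [(0,GM,1),(2,GS,0),(1,GD,0),(1,GL,0)]"
    by (rule rep_sh[OF exch[of GM 0 GS, symmetric], of 0 _ _ 0 0]) simp_all
  finally show ?thesis .
qed
lemma b_Fk: "SM 1 [(0,GF,0)] = SM 1 [(1,GM,0),(1,GS,1),(0,GD,1),(0,GL,1)]"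
proof -
  have "SM 1 [(0,GF,0)] = SM 1 [(0,GM,1),(2,GS,0),(1,GD,0),(1,GL,0)]"
    by (rule rep_sh[OF b_F, of 0 _ _ 0 0]) simp_all
  also have "\<dots> = SM 1 [(1,GM,0),(1,GS,1),(0,GD,1),(0,GL,1)]"
    by (rule rep_sh[OF b_Kr[symmetric], of 0 _ _ 0 0]) simp_all
  finally show ?thesis .
qed
lemma b_Fr1: "SM 2 [(0,GM,1),(1,GF,0)] = SM 2 [(0,GF,0),(0,GM,0)]"
proof -
  have "SM 2 [(0,GM,1),(1,GF,0)] = SM 2 [(0,GM,1),(1,GM,1),(3,GS,0),(2,GD,0),(2,GL,0)]"
    by (rule rep_sh[OF b_F, of 1 _ _ 1 0]) simp_all
  also have "\<dots> = SM 2 [(0,GM,1),(0,GM,2),(3,GS,0),(2,GD,0),(2,GL,0)]"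
    by (rule rep_sh[OF b_assoc[symmetric], of 0 _ _ 0 1]) simp_all
  also have "\<dots> = SM 2 [(0,GM,1),(2,GS,0),(0,GM,2),(2,GD,0),(2,GL,0)]"
    by (rule rep_sh[OF exch[of GM 1 GS], of 1 _ _ 0 0]) simp_all
  also have "\<dots> = SM 2 [(0,GM,1),(2,GS,0),(1,GD,0),(0,GM,1),(2,GL,0)]"
    by (rule rep_sh[OF exch[of GM 0 GD], of 2 _ _ 0 0]) simp_all
  also have "\<dots> = SM 2 [(0,GM,1),(2,GS,0),(1,GD,0),(1,GL,0),(0,GM,0)]"
    by (rule rep_sh[OF exch[of GM 0 GL], of 3 _ _ 0 0]) simp_all
  also have "\<dots> = SM 2 [(0,GF,0),(0,GM,0)]"
    by (rule rep_sh[OF b_F[symmetric], of 0 _ _ 0 0]) simp_all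
  finally show ?thesis .
qed
lemma b_Fr2: "SM 2 [(1,GM,0),(0,GF,1)] = SM 2 [(0,GF,0),(0,GM,0)]"
proof -
  have "SM 2 [(1,GM,0),(0,GF,1)] = SM 2 [(1,GM,0),(1,GM,1),(1,GS,2),(0,GD,2),(0,GL,2)]"
    by (rule rep_sh[OF b_Fk, of 1 _ _ 0 1]) simp_all
  also have "\<dots> = SM 2 [(1,GM,0),(2,GM,0),(1,GS,2),(0,GD,2),(0,GL,2)]"
    by (rule rep_sh[OF b_assoc, of 0 _ _ 1 0]) simp_all
  also have "\<dots> = SM 2 [(1,GM,0),(1,GS,1),(2,GM,0),(0,GD,2),(0,GL,2)]"
    by (rule rep_sh[OF exch[of GS 0 GM, symmetric], of 1 _ _ 1 0]) simp_all
  also have "\<dots> = SM 2 [(1,GM,0),(1,GS,1),(0,GD,1),(1,GM,0),(0,GL,2)]"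
    by (rule rep_sh[OF exch[of GD 0 GM, symmetric], of 2 _ _ 0 0]) simp_all
  also have "\<dots> = SM 2 [(1,GM,0),(1,GS,1),(0,GD,1),(0,GL,1),(0,GM,0)]"
    by (rule rep_sh[OF exch[of GL 0 GM, symmetric], of 3 _ _ 0 0]) simp_all
  also have "\<dots> = SM 2 [(0,GF,0),(0,GM,0)]"
    by (rule rep_sh[OF b_Fk[symmetric], of 0 _ _ 0 0]) simp_all
  finally show ?thesis .
qed
lemma b_FcoA: "SM 1 [(0,GF,1),(0,GF,0)] = SM 1 [(1,GM,1),(0,GF,2),(1,GF,0),(0,GU,1)]"
proof -
  have "SM 1 [(0,GF,1),(0,GF,0)] = SM 1 [(0,GF,1),(0,GF,0),(0,GM,0),(0,GU,1)]"
    by (rule rep_sh[OF b_unitL[symmetric], of 2 _ _ 0 0]) simp_all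
  also have "\<dots> = SM 1 [(0,GF,1),(0,GM,1),(1,GF,0),(0,GU,1)]"
    by (rule rep_sh[OF b_Fr1[symmetric], of 1 _ _ 0 0]) simp_all
  also have "\<dots> = SM 1 [(1,GM,1),(0,GF,2),(1,GF,0),(0,GU,1)]"
    by (rule rep_sh[OF b_Fr2[symmetric], of 0 _ _ 0 1]) simp_all
  finally show ?thesis .
qed
lemma b_FcoB: "SM 1 [(1,GF,0),(0,GF,0)] = SM 1 [(1,GM,1),(0,GF,2),(1,GF,0),(0,GU,1)]"
proof -
  have "SM 1 [(1,GF,0),(0,GF,0)] = SM 1 [(1,GF,0),(0,GF,0),(0,GM,0),(0,GU,1)]"
    by (rule rep_sh[OF b_unitL[symmetric], of 2 _ _ 0 0]) simp_all
  also have "\<dots> = SM 1 [(1,GF,0),(1,GM,0),(0,GF,1),(0,GU,1)]"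
    by (rule rep_sh[OF b_Fr2[symmetric], of 1 _ _ 0 0]) simp_all
  also have "\<dots> = SM 1 [(1,GM,1),(2,GF,0),(0,GF,1),(0,GU,1)]"
    by (rule rep_sh[OF b_Fr1[symmetric], of 0 _ _ 1 0]) simp_all
  also have "\<dots> = SM 1 [(1,GM,1),(0,GF,2),(1,GF,0),(0,GU,1)]"
    by (rule rep_sh[OF exch[of GF 0 GF, symmetric], of 1 _ _ 0 0]) simp_all
  finally show ?thesis .
qed
lemma b_FcL: "SM 1 [(0,Gl,1),(0,GF,0)] = SM 1 []"
proof -
  have "SM 1 [(0,Gl,1),(0,GF,0)] = SM 1 [(0,Gl,1),(0,GM,1),(2,GS,0),(1,GD,0),(1,GL,0)]"
    by (rule rep_sh[OF b_F, of 1 _ _ 0 0]) simp_all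
  also have "\<dots> = SM 1 []"
    by (rule rep_sh[OF b_L, of 0 _ _ 0 0]) simp_all
  finally show ?thesis .
qed
lemma raw_F6: "Cmp C an mu = Cmp C mu (Cmp C (TnM C an ii) (Cmp C (TnM C ii an) sg))"
  using b_F6 by (simp add: rsimps)

lemma b_dS: "SM 1 [(0,GD,0),(0,GS,0)] = SM 1 [(0,GY,0),(0,GS,1),(1,GS,0),(0,GD,0)]"
proof -
  interpret dd: ihopf "opr C" "dualH H" by unfold_locales (simp_all add: smc_opr dual_ih)
  have "Cmp C de an = Cmp C (Cmp C (Cmp C sg (TnM C an ii)) (TnM C ii an)) de"
    using dd.raw_F6 by simp
  then show ?thesis by (simp add: rsimps cmp_assoc)
qed

lemma b_dSp: "SM 1 [(0,GS,1),(1,GS,0),(0,GD,0)] = SM 1 [(0,GY,0),(0,GD,0),(0,GS,0)]"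
proof -
  have "SM 1 [(0,GS,1),(1,GS,0),(0,GD,0)] = SM 1 [(0,GY,0),(0,GY,0),(0,GS,1),(1,GS,0),(0,GD,0)]"
    by (rule rep_sh[OF b_YY[symmetric], of 0 _ _ 0 0]) simp_all
  also have "\<dots> = SM 1 [(0,GY,0),(0,GD,0),(0,GS,0)]"
    by (rule rep_sh[OF b_dS[symmetric], of 1 _ _ 0 0]) simp_all
  finally show ?thesis .
qed
lemma b_lSd: "SM 1 [(1,Gl,0),(1,GS,0),(0,GD,0)] = SM 1 [(0,GU,0),(0,Gl,0),(0,GS,0)]"
proof -
  have "SM 1 [(1,Gl,0),(1,GS,0),(0,GD,0)] = SM 1 [(0,GI,0),(0,GS,0),(1,Gl,0),(1,GS,0),(0,GD,0)]"
    by (rule rep_sh[OF b_SiS[symmetric], of 0 _ _ 0 0]) simp_all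
  also have "\<dots> = SM 1 [(0,GI,0),(1,Gl,0),(0,GS,1),(1,GS,0),(0,GD,0)]"
    by (rule rep_sh[OF exch[of GS 0 Gl], of 1 _ _ 0 0]) simp_all
  also have "\<dots> = SM 1 [(0,GI,0),(1,Gl,0),(0,GY,0),(0,GD,0),(0,GS,0)]"
    by (rule rep_sh[OF b_dSp, of 2 _ _ 0 0]) simp_all
  also have "\<dots> = SM 1 [(0,GI,0),(0,Gl,1),(0,GD,0),(0,GS,0)]"
    by (rule rep_sh[OF b_Yl[symmetric], of 1 _ _ 0 0]) simp_all
  also have "\<dots> = SM 1 [(0,GI,0),(0,GU,0),(0,Gl,0),(0,GS,0)]"
    by (rule rep_sh[OF b_I2, of 1 _ _ 0 0]) simp_all
  also have "\<dots> = SM 1 [(0,GU,0),(0,Gl,0),(0,GS,0)]"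
    by (rule rep_sh[OF b_Siu, of 0 _ _ 0 0]) simp_all
  finally show ?thesis .
qed
lemma b_Q: "SM 1 [(0,Gl,0)] = SM 1 [(0,Gl,0),(1,Gl,0),(1,GS,0),(1,GL,0)]"
proof -
  have "SM 1 [(0,Gl,0)] = SM 1 [(0,Gl,0),(0,Gl,1),(0,GF,0)]"
    by (rule rep_sh[OF b_FcL[symmetric], of 1 _ _ 0 0]) simp_all
  also have "\<dots> = SM 1 [(0,Gl,0),(1,Gl,0),(0,GF,0)]"
    by (rule rep_sh[OF exch[of Gl 0 Gl, symmetric], of 0 _ _ 0 0]) simp_all
  also have "\<dots> = SM 1 [(0,Gl,0),(1,Gl,0),(0,GM,1),(2,GS,0),(1,GD,0),(1,GL,0)]"
    by (rule rep_sh[OF b_F, of 2 _ _ 0 0]) simp_all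
  also have "\<dots> = SM 1 [(0,Gl,0),(0,GM,0),(2,Gl,0),(2,GS,0),(1,GD,0),(1,GL,0)]"
    by (rule rep_sh[OF exch[of GM 0 Gl, symmetric], of 1 _ _ 0 0]) simp_all
  also have "\<dots> = SM 1 [(0,Gl,0),(0,GM,0),(1,GU,0),(1,Gl,0),(1,GS,0),(1,GL,0)]"
    by (rule rep_sh[OF b_lSd, of 2 _ _ 1 0]) simp_all
  also have "\<dots> = SM 1 [(0,Gl,0),(1,Gl,0),(1,GS,0),(1,GL,0)]"
    by (rule rep_sh[OF b_unitR, of 1 _ _ 0 0]) simp_all
  finally show ?thesis .
qed
lemma b_sA: "SM 0 [(0,Gl,0),(1,Gl,0),(1,GS,0),(1,GL,0),(0,GL,0)] = SM 0 [(0,Gl,0),(0,GS,0),(0,GL,0)]"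
proof -
  have "SM 0 [(0,Gl,0),(1,Gl,0),(1,GS,0),(1,GL,0),(0,GL,0)] = SM 0 [(0,Gl,0),(1,Gl,0),(1,GS,0),(0,GL,1),(0,GL,0)]"
    by (rule rep_sh[OF exch[of GL 0 GL, symmetric], of 3 _ _ 0 0]) simp_all
  also have "\<dots> = SM 0 [(0,Gl,0),(1,Gl,0),(0,GL,1),(0,GS,0),(0,GL,0)]"
    by (rule rep_sh[OF exch[of GL 0 GS, symmetric], of 2 _ _ 0 0]) simp_all
  also have "\<dots> = SM 0 [(0,Gl,0),(0,GL,0),(0,Gl,0),(0,GS,0),(0,GL,0)]"
    by (rule rep_sh[OF exch[of GL 0 Gl, symmetric], of 1 _ _ 0 0]) simp_all
  also have "\<dots> = SM 0 [(0,Gl,0),(0,GS,0),(0,GL,0)]"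
    by (rule rep_sh[OF b_I3, of 0 _ _ 0 0]) simp_all
  finally show ?thesis .
qed
lemma b_sB: "SM 0 [(0,Gl,0),(1,Gl,0),(1,GS,0),(1,GL,0),(0,GL,0)] = SM 0 []"
proof -
  have "SM 0 [(0,Gl,0),(1,Gl,0),(1,GS,0),(1,GL,0),(0,GL,0)] = SM 0 [(0,Gl,0),(0,GL,0)]"
    by (rule rep_sh[OF b_Q[symmetric], of 0 _ _ 0 0]) simp_all
  also have "\<dots> = SM 0 []"
    by (rule rep_sh[OF b_I3, of 0 _ _ 0 0]) simp_all
  finally show ?thesis .
qed
lemma b_s: "SM 0 [(0,Gl,0),(0,GS,0),(0,GL,0)] = SM 0 []"
  using b_sA b_sB by simp

lemma b_FcR: "SM 1 [(1,Gl,0),(0,GF,0)] = SM 1 []"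
proof -
  have "SM 1 [(1,Gl,0),(0,GF,0)] = SM 1 [(1,Gl,0),(0,GM,1),(2,GS,0),(1,GD,0),(1,GL,0)]"
    by (rule rep_sh[OF b_F, of 1 _ _ 0 0]) simp_all
  also have "\<dots> = SM 1 [(0,GM,0),(2,Gl,0),(2,GS,0),(1,GD,0),(1,GL,0)]"
    by (rule rep_sh[OF exch[of GM 0 Gl, symmetric], of 0 _ _ 0 0]) simp_all
  also have "\<dots> = SM 1 [(0,GM,0),(1,GU,0),(1,Gl,0),(1,GS,0),(1,GL,0)]"
    by (rule rep_sh[OF b_lSd, of 1 _ _ 1 0]) simp_all
  also have "\<dots> = SM 1 [(1,Gl,0),(1,GS,0),(1,GL,0)]"
    by (rule rep_sh[OF b_unitR, of 0 _ _ 0 0]) simp_all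
  also have "\<dots> = SM 1 []"
    by (rule rep_sh[OF b_s, of 0 _ _ 1 0]) simp_all
  finally show ?thesis .
qed
lemma b_Fco: "SM 1 [(0,GF,1),(0,GF,0)] = SM 1 [(1,GF,0),(0,GF,0)]"
  using b_FcoA b_FcoB by simp


end

context ihopf begin

lemma frob_alg: "is_frobenius_algebra C A mu un (frob_comult C H) lam"
proof -
  have alg: "is_algebra C A mu un" using ih unfolding is_int_hopf_def Let_def by blast
  have co: "is_coalgebra C A (frob_comult C H) lam"
    unfolding is_coalgebra_def
    using b_Fco b_FcL b_FcR by (simp add: rsimps hom_def)
  show ?thesis unfolding is_frobenius_algebra_def
    using alg co b_Fr1 b_Fr2 by (simp add: rsimps)
qed

end

context smcl begin

lemma cmp_cont: "Cmp C g f = h \<Longrightarrow> f \<in> Ar C \<Longrightarrow> g \<in> Ar C \<Longrightarrow> t \<in> Ar C \<Longrightarrow>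
   Cod C f = Dom C g \<Longrightarrow> Cod C t = Dom C f \<Longrightarrow> Cmp C g (Cmp C f t) = Cmp C h t"
  by (simp add: cmp_assoc[symmetric])

lemma mor_antipode:
  assumes H: "is_int_hopf C H" and K: "is_int_hopf C K" and fm: "is_int_hopf_morphism C H K f"
  shows "Cmp C (hS K) f = Cmp C f (hS H)"
proof -
  interpret h: ihopf C H by unfold_locales (rule H)
  interpret k: ihopf C K by unfold_locales (rule K)
  let ?X = "hob H" and ?Y = "hob K"
  have ft[simp]: "f \<in> Ar C" "Dom C f = ?X" "Cod C f = ?Y"
    using fm unfolding is_int_hopf_morphism_def hom_def by auto
  have f_m: "Cmp C f (hm H) = Cmp C (hm K) (TnM C f f)"
   and f_u: "Cmp C f (hu H) = hu K"
   and f_d: "Cmp C (hD K) f = Cmp C (TnM C f f) (hD H)"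
   and f_e: "Cmp C (he K) f = he H"
    using fm unfolding is_int_hopf_morphism_def by auto
  define cv where "cv g h = Cmp C (hm K) (Cmp C (TnM C g h) (hD H))" for g h
  define ue where "ue = Cmp C (hu K) (he H)"
  have ue_t[simp]: "ue \<in> Ar C" "Dom C ue = ?X" "Cod C ue = ?Y" unfolding ue_def by simp_all
  have cv_t[simp]: "g \<in> Ar C \<Longrightarrow> Dom C g = ?X \<Longrightarrow> Cod C g = ?Y \<Longrightarrow>
    h \<in> Ar C \<Longrightarrow> Dom C h = ?X \<Longrightarrow> Cod C h = ?Y \<Longrightarrow>
    cv g h \<in> Ar C \<and> Dom C (cv g h) = ?X \<and> Cod C (cv g h) = ?Y" for g h
    unfolding cv_def by simp
  have c1: "cv g ue = g" if g: "g \<in> Ar C" "Dom C g = ?X" "Cod C g = ?Y" for g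
  proof -
    have e1: "TnM C g ue = Cmp C (TnM C (Idm C ?Y) (hu K)) (TnM C g (he H))"
      unfolding ue_def using g by (simp add: interch)
    have e2: "TnM C g (he H) = Cmp C g (TnM C (Idm C ?X) (he H))"
      using interch[of "Idm C ?X" g "he H" "Idm C (Unt C)"] g by simp
    have "cv g ue = Cmp C (Cmp C (hm K) (TnM C (Idm C ?Y) (hu K))) (Cmp C g (Cmp C (TnM C (Idm C ?X) (he H)) (hD H)))"
      unfolding cv_def e1 e2 using g by (simp add: cmp_assoc)
    also have "\<dots> = g" using g by (simp add: k.r_unitR h.r_counitR)
    finally show ?thesis .
  qed
  have c2: "cv ue g = g" if g: "g \<in> Ar C" "Dom C g = ?X" "Cod C g = ?Y" for g
  proof -
    have e1: "TnM C ue g = Cmp C (TnM C (hu K) (Idm C ?Y)) (TnM C (he H) g)"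
      unfolding ue_def using g by (simp add: interch)
    have e2: "TnM C (he H) g = Cmp C g (TnM C (he H) (Idm C ?X))"
      using interch[of "he H" "Idm C (Unt C)" "Idm C ?X" g] g by simp
    have "cv ue g = Cmp C (Cmp C (hm K) (TnM C (hu K) (Idm C ?Y))) (Cmp C g (Cmp C (TnM C (he H) (Idm C ?X)) (hD H)))"
      unfolding cv_def e1 e2 using g by (simp add: cmp_assoc)
    also have "\<dots> = g" using g by (simp add: k.r_unitL h.r_counitL)
    finally show ?thesis .
  qed
  have c3: "cv (cv g h) l = cv g (cv h l)"
    if g: "g \<in> Ar C" "Dom C g = ?X" "Cod C g = ?Y" and h: "h \<in> Ar C" "Dom C h = ?X" "Cod C h = ?Y"
    and l: "l \<in> Ar C" "Dom C l = ?X" "Cod C l = ?Y" for g h l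
  proof -
    have e1: "TnM C (cv g h) l = Cmp C (TnM C (hm K) (Idm C ?Y)) (Cmp C (TnM C (TnM C g h) l) (TnM C (hD H) (Idm C ?X)))"
      unfolding cv_def using g h l by (simp add: interch)
    have e2: "TnM C g (cv h l) = Cmp C (TnM C (Idm C ?Y) (hm K)) (Cmp C (TnM C g (TnM C h l)) (TnM C (Idm C ?X) (hD H)))"
      unfolding cv_def using g h l by (simp add: interch)
    have "cv (cv g h) l = Cmp C (Cmp C (hm K) (TnM C (hm K) (Idm C ?Y))) (Cmp C (TnM C (TnM C g h) l) (Cmp C (TnM C (hD H) (Idm C ?X)) (hD H)))"
      unfolding cv_def[of "cv g h" l] e1 using g h l by (simp add: cmp_assoc cv_def)
    also have "\<dots> = Cmp C (Cmp C (hm K) (TnM C (Idm C ?Y) (hm K))) (Cmp C (TnM C g (TnM C h l)) (Cmp C (TnM C (Idm C ?X) (hD H)) (hD H)))"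
      using g h l by (simp add: k.r_assoc h.r_coassoc tn_assoc)
    also have "\<dots> = cv g (cv h l)"
      unfolding cv_def[of g "cv h l"] e2 using g h l by (simp add: cmp_assoc cv_def)
    finally show ?thesis .
  qed
  have c4: "cv f (Cmp C f (hS H)) = ue"
  proof -
    have e1: "TnM C f (Cmp C f (hS H)) = Cmp C (TnM C f f) (TnM C (Idm C ?X) (hS H))"
      by (simp add: interch)
    have "cv f (Cmp C f (hS H)) = Cmp C (Cmp C (hm K) (TnM C f f)) (Cmp C (TnM C (Idm C ?X) (hS H)) (hD H))"
      unfolding cv_def e1 by (simp add: cmp_assoc)
    also have "\<dots> = Cmp C f (Cmp C (hm H) (Cmp C (TnM C (Idm C ?X) (hS H)) (hD H)))"
      unfolding f_m[symmetric] by (simp add: cmp_assoc)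
    also have "\<dots> = Cmp C f (Cmp C (hu H) (he H))"
      using h.r_H2 by (simp add: cmp_assoc)
    also have "\<dots> = ue" unfolding ue_def f_u[symmetric] by (simp add: cmp_assoc)
    finally show ?thesis .
  qed
  have c5: "cv (Cmp C (hS K) f) f = ue"
  proof -
    have e1: "TnM C (Cmp C (hS K) f) f = Cmp C (TnM C (hS K) (Idm C ?Y)) (TnM C f f)"
      by (simp add: interch)
    have "cv (Cmp C (hS K) f) f = Cmp C (Cmp C (hm K) (TnM C (hS K) (Idm C ?Y))) (Cmp C (TnM C f f) (hD H))"
      unfolding cv_def e1 by (simp add: cmp_assoc)
    also have "\<dots> = Cmp C (Cmp C (Cmp C (hm K) (TnM C (hS K) (Idm C ?Y))) (hD K)) f"
      unfolding f_d[symmetric] by (simp add: cmp_assoc)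
    also have "\<dots> = ue"
      unfolding ue_def k.r_H1 f_e[symmetric] by (simp add: cmp_assoc)
    finally show ?thesis .
  qed
  have "Cmp C (hS K) f = cv (Cmp C (hS K) f) ue" using c1 by simp
  also have "\<dots> = cv (Cmp C (hS K) f) (cv f (Cmp C f (hS H)))" using c4 by simp
  also have "\<dots> = cv (cv (Cmp C (hS K) f) f) (Cmp C f (hS H))" by (simp add: c3)
  also have "\<dots> = Cmp C f (hS H)" using c5 c2 by simp
  finally show ?thesis .
qed

end

context smcl begin

lemma mor_frob:
  assumes H: "is_int_hopf C H" and K: "is_int_hopf C K" and fm: "is_int_hopf_morphism C H K f"
  shows "is_frobenius_morphism C (hob H) (hm H) (hu H) (frob_comult C H) (hl H)
              (hob K) (hm K) (hu K) (frob_comult C K) (hl K) f"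
proof -
  interpret h: ihopf C H by unfold_locales (rule H)
  interpret k: ihopf C K by unfold_locales (rule K)
  let ?X = "hob H" and ?Y = "hob K"
  have ft[simp]: "f \<in> Ar C" "Dom C f = ?X" "Cod C f = ?Y"
    using fm unfolding is_int_hopf_morphism_def hom_def by auto
  have f_m: "Cmp C f (hm H) = Cmp C (hm K) (TnM C f f)"
   and f_d: "Cmp C (hD K) f = Cmp C (TnM C f f) (hD H)"
   and f_L: "Cmp C f (hL H) = hL K"
    using fm unfolding is_int_hopf_morphism_def by auto
  have f_S: "Cmp C (hS K) f = Cmp C f (hS H)" by (rule mor_antipode[OF H K fm])
  have e1: "Cmp C (TnM C (Idm C ?Y) (Cmp C (hD K) (hL K))) f = TnM C f (Cmp C (hD K) (hL K))"
    using interch[of f "Idm C ?Y" "Idm C (Unt C)" "Cmp C (hD K) (hL K)"] by simp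
  have e2: "Cmp C (hD K) (hL K) = Cmp C (TnM C f f) (Cmp C (hD H) (hL H))"
    unfolding f_L[symmetric] by (simp add: cmp_assoc[symmetric] f_d)
  have e3: "TnM C f (Cmp C (TnM C f f) (Cmp C (hD H) (hL H)))
     = Cmp C (TnM C (TnM C f f) f) (TnM C (Idm C ?X) (Cmp C (hD H) (hL H)))"
    by (simp add: interch tn_assoc)
  have e4: "Cmp C (TnM C (hm K) (hS K)) (TnM C (TnM C f f) f) = Cmp C (TnM C f f) (TnM C (hm H) (hS H))"
    by (simp add: interch f_m[symmetric] f_S)
  have "Cmp C (frob_comult C K) f
      = Cmp C (TnM C (hm K) (hS K)) (Cmp C (TnM C (Idm C ?Y) (Cmp C (hD K) (hL K))) f)"
    unfolding frob_comult_def by (simp add: cmp_assoc)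
  also have "\<dots> = Cmp C (TnM C (hm K) (hS K)) (Cmp C (TnM C (TnM C f f) f) (TnM C (Idm C ?X) (Cmp C (hD H) (hL H))))"
    unfolding e1 unfolding e2 unfolding e3 ..
  also have "\<dots> = Cmp C (TnM C f f) (frob_comult C H)"
    unfolding frob_comult_def by (simp add: cmp_assoc[symmetric] e4)
  finally have D: "Cmp C (frob_comult C K) f = Cmp C (TnM C f f) (frob_comult C H)" .
  show ?thesis using fm D unfolding is_frobenius_morphism_def is_int_hopf_morphism_def by simp
qed

end

theorem mainTheorem15:
  fixes C :: "('o,'m) smc"
  assumes "strict_symmetric_monoidal_cat C"
  shows "(\<forall>H. is_int_hopf C H \<longrightarrow>
            is_frobenius_algebra C (hob H) (hm H) (hu H) (frob_comult C H) (hl H)) \<and>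
         (\<forall>H K f. is_int_hopf C H \<longrightarrow> is_int_hopf C K \<longrightarrow> is_int_hopf_morphism C H K f \<longrightarrow>
            is_frobenius_morphism C
              (hob H) (hm H) (hu H) (frob_comult C H) (hl H)
              (hob K) (hm K) (hu K) (frob_comult C K) (hl K) f)"
proof -
  interpret smcl C by unfold_locales (rule assms)
  show ?thesis
  proof (intro conjI allI impI)
    fix H assume "is_int_hopf C H"
    then interpret ihopf C H by unfold_locales
    show "is_frobenius_algebra C (hob H) (hm H) (hu H) (frob_comult C H) (hl H)" by (rule frob_alg)
  next
    fix H K f assume "is_int_hopf C H" "is_int_hopf C K" "is_int_hopf_morphism C H K f"
    then show "is_frobenius_morphism C
              (hob H) (hm H) (hu H) (frob_comult C H) (hl H)
              (hob K) (hm K) (hu K) (frob_comult C K) (hl K) f" by (rule mor_frob)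
  qed
qed

end
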